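(* The big-O problem for instances $(\mathcal{W},s,s')$ with $L_s(\mathcal{W})$ and $L_{s'}(\mathcal{W})$ letter-bounded reduces algorithmically to the big-O problem for instances whose two languages are plus-letter-bounded; that is, it is decidable by an algorithm with access to an oracle for the latter problem.
   Context: A (non-negative) weighted automaton is $\langle Q,\Sigma,M,F\rangle$ with finite $Q$, finite $\Sigma$, $M:\Sigma\to\mathbb{Q}_{\ge0}^{Q\times Q}$, $F\subseteq Q$; $\nu_s(a_1\cdots a_n)=\sum_{t\in F}(M(a_1)\cdots M(a_n))_{s,t}$ and $L_s(\mathcal{W})=\{w:\nu_s(w)>0\}$. State $s$ is big-O of $s'$ if there is $C>0$ with $\nu_s(w)\le C\nu_{s'}(w)$ for all $w\in\Sigma^*$; the big-O problem asks this for given $(\mathcal{W},s,s')$. A language $L$ is letter-bounded if $L\subseteq a_1^*\cdots a_m^*$, and plus-letter-bounded if $L\subseteq a_1^+\cdots a_m^+$, for some letters $a_1,\dots,a_m\in\Sigma$. *)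

theory Defs
  imports "Jordan_Normal_Form.Matrix" "HOL-Library.Nat_Bijection"
begin

(* States are 0..<nstates, letters are 0..<nletters; trans a is the
  (nstates x nstates) non-negative rational matrix M(a); final is F. *)

record wa =
  nstates :: nat
  nletters :: nat
  trans :: "nat \<Rightarrow> rat mat"
  final :: "nat set"

definition wf_wa :: "wa \<Rightarrow> bool" where
  "wf_wa A \<longleftrightarrow>
     (\<forall>a < nletters A. trans A a \<in> carrier_mat (nstates A) (nstates A)
        \<and> (\<forall>i < nstates A. \<forall>j < nstates A. trans A a $$ (i, j) \<ge> 0))
     \<and> final A \<subseteq> {..<nstates A}"

definition words :: "wa \<Rightarrow> nat list set" where
  "words A = lists {..<nletters A}"

definition nu :: "wa \<Rightarrow> nat \<Rightarrow> nat list \<Rightarrow> rat" where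
  "nu A s w = (\<Sum>t\<in>final A. (foldr (*) (map (trans A) w) (1\<^sub>m (nstates A))) $$ (s, t))"

definition lang :: "wa \<Rightarrow> nat \<Rightarrow> nat list set" where
  "lang A s = {w \<in> words A. nu A s w > 0}"

type_synonym bo_instance = "wa \<times> nat \<times> nat"

definition wf_inst :: "bo_instance \<Rightarrow> bool" where
  "wf_inst I = (case I of (A, s, s') \<Rightarrow> wf_wa A \<and> s < nstates A \<and> s' < nstates A)"

definition big_O :: "bo_instance \<Rightarrow> bool" where
  "big_O I = (case I of (A, s, s') \<Rightarrow>
     (\<exists>C::real. C > 0 \<and> (\<forall>w\<in>words A. real_of_rat (nu A s w) \<le> C * real_of_rat (nu A s' w))))"

definition in_star_seq :: "nat list \<Rightarrow> nat list \<Rightarrow> bool" where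
  "in_star_seq as w \<longleftrightarrow>
     (\<exists>ns. length ns = length as \<and> w = concat (map2 (\<lambda>n a. replicate n a) ns as))"

definition in_plus_seq :: "nat list \<Rightarrow> nat list \<Rightarrow> bool" where
  "in_plus_seq as w \<longleftrightarrow>
     (\<exists>ns. length ns = length as \<and> (\<forall>n\<in>set ns. n > 0)
        \<and> w = concat (map2 (\<lambda>n a. replicate n a) ns as))"

definition letter_bounded :: "wa \<Rightarrow> nat list set \<Rightarrow> bool" where
  "letter_bounded A L \<longleftrightarrow>
     (\<exists>as. set as \<subseteq> {..<nletters A} \<and> (\<forall>w\<in>L. in_star_seq as w))"

definition plus_letter_bounded :: "wa \<Rightarrow> nat list set \<Rightarrow> bool" where
  "plus_letter_bounded A L \<longleftrightarrow>
     (\<exists>as. set as \<subseteq> {..<nletters A} \<and> (\<forall>w\<in>L. in_plus_seq as w))"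

definition lb_inst :: "bo_instance \<Rightarrow> bool" where
  "lb_inst I = (case I of (A, s, s') \<Rightarrow>
     wf_inst I \<and> letter_bounded A (lang A s) \<and> letter_bounded A (lang A s'))"

definition plb_inst :: "bo_instance \<Rightarrow> bool" where
  "plb_inst I = (case I of (A, s, s') \<Rightarrow>
     wf_inst I \<and> plus_letter_bounded A (lang A s) \<and> plus_letter_bounded A (lang A s'))"

definition enc_rat :: "rat \<Rightarrow> nat" where
  "enc_rat r = (case quotient_of r of (p, q) \<Rightarrow> prod_encode (int_encode p, int_encode q))"

definition enc_mat :: "rat mat \<Rightarrow> nat" where
  "enc_mat M = list_encode [dim_row M, dim_col M,
      list_encode (map (\<lambda>row. list_encode (map enc_rat row)) (mat_to_list M))]"

definition enc_inst :: "bo_instance \<Rightarrow> nat" where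
  "enc_inst I = (case I of (A, s, s') \<Rightarrow>
     list_encode [nstates A, nletters A,
       list_encode (map (\<lambda>a. enc_mat (trans A a)) [0..<nletters A]),
       list_encode (sorted_list_of_set (final A)), s, s'])"

datatype recf = Zero | Succ | Proj nat | Comp recf "recf list" | Prim recf recf | Mini recf | Orc

inductive ev :: "(nat \<Rightarrow> nat) \<Rightarrow> recf \<Rightarrow> nat list \<Rightarrow> nat \<Rightarrow> bool" for Or where
  ev_zero: "ev Or Zero xs 0"
| ev_succ: "ev Or Succ (x # xs) (Suc x)"
| ev_proj: "i < length xs \<Longrightarrow> ev Or (Proj i) xs (xs ! i)"
| ev_comp: "length ys = length gs \<Longrightarrow> (\<forall>i < length gs. ev Or (gs ! i) xs (ys ! i))
             \<Longrightarrow> ev Or f ys z \<Longrightarrow> ev Or (Comp f gs) xs z"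
| ev_prim0: "ev Or f xs y \<Longrightarrow> ev Or (Prim f g) (0 # xs) y"
| ev_primS: "ev Or (Prim f g) (n # xs) y \<Longrightarrow> ev Or g (y # n # xs) z
             \<Longrightarrow> ev Or (Prim f g) (Suc n # xs) z"
| ev_mini: "ev Or f (y # xs) 0 \<Longrightarrow> (\<forall>z < y. \<exists>v. ev Or f (z # xs) v \<and> v > 0)
             \<Longrightarrow> ev Or (Mini f) xs y"
| ev_orc: "ev Or Orc (x # xs) (Or x)"

definition plb_oracle :: "(nat \<Rightarrow> nat) \<Rightarrow> bool" where
  "plb_oracle Or \<longleftrightarrow> (\<forall>I. plb_inst I \<longrightarrow> Or (enc_inst I) = (if big_O I then 1 else 0))"

end

theory Submission
  imports Defs
begin


definition cmp :: "nat \<Rightarrow> recf \<Rightarrow> ((nat \<Rightarrow> nat) \<Rightarrow> nat list \<Rightarrow> nat) \<Rightarrow> bool" where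
  "cmp n p F \<longleftrightarrow> (\<forall>Or xs. length xs = n \<longrightarrow> ev Or p xs (F Or xs))"

lemma ev_det: "ev Or p xs y \<Longrightarrow> ev Or p xs y' \<Longrightarrow> y = y'"
proof (induction arbitrary: y' rule: ev.induct)
  case (ev_zero xs) from ev_zero.prems show ?case by (cases rule: ev.cases) (use ev_zero in auto)
next
  case (ev_succ x xs) from ev_succ.prems show ?case by (cases rule: ev.cases) (use ev_succ in auto)
next
  case (ev_proj i xs) from ev_proj.prems show ?case by (cases rule: ev.cases) (use ev_proj in auto)
next
  case (ev_comp ys gs xs f z)
  from ev_comp.prems show ?case
  proof (cases rule: ev.cases)
    case (ev_comp ys')
    have "ys' = ys"
      by (rule nth_equalityI) (use ev_comp ev_comp.hyps ev_comp.IH in auto)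
    then show ?thesis using ev_comp ev_comp.IH by auto
  qed
next
  case (ev_prim0 f xs y g) from ev_prim0.prems show ?case by (cases rule: ev.cases) (use ev_prim0 in auto)
next
  case (ev_primS g n xs y z f)
  from ev_primS.prems show ?case by (cases rule: ev.cases) (use ev_primS.IH in auto)
next
  case (ev_mini f y xs)
  from ev_mini.prems show ?case
  proof (cases rule: ev.cases)
    case ev_mini
    show ?thesis
    proof (rule ccontr)
      assume "y \<noteq> y'"
      then consider "y < y'" | "y' < y" by linarith
      then show False
      proof cases
        case 1
        with ev_mini obtain v where "ev Or f (y # xs) v" "v > 0" by auto
        with ev_mini.IH(1) show False by force
      next
        case 2
        with ev_mini.IH(2) obtain v where "ev Or f (y' # xs) v" "\<forall>v'. ev Or f (y' # xs) v' \<longrightarrow> v = v'" "v > 0" by blast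
        with ev_mini show False by force
      qed
    qed
  qed
next
  case (ev_orc x xs) from ev_orc.prems show ?case by (cases rule: ev.cases) (use ev_orc in auto)
qed

lemma cmp_zero[intro]: "cmp n Zero (\<lambda>Or xs. 0)"
  unfolding cmp_def by (auto intro: ev.intros)

lemma cmp_proj[intro]: "i < n \<Longrightarrow> cmp n (Proj i) (\<lambda>Or xs. xs ! i)"
  unfolding cmp_def by (auto intro: ev.intros)

lemma cmp_succ[intro]: "n = 1 \<Longrightarrow> cmp n Succ (\<lambda>Or xs. Suc (xs ! 0))"
  unfolding cmp_def by (auto simp: length_Suc_conv intro: ev.intros)

lemma cmp_orc[intro]: "n = 1 \<Longrightarrow> cmp n Orc (\<lambda>Or xs. Or (xs ! 0))"
  unfolding cmp_def by (auto simp: length_Suc_conv intro: ev.intros)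

definition cmps :: "nat \<Rightarrow> recf list \<Rightarrow> ((nat \<Rightarrow> nat) \<Rightarrow> nat list \<Rightarrow> nat) list \<Rightarrow> bool" where
  "cmps n gs Gs \<longleftrightarrow> length gs = length Gs \<and> (\<forall>i<length gs. cmp n (gs ! i) (Gs ! i))"

lemma cmps_Nil[intro]: "cmps n [] []" by (simp add: cmps_def)
lemma cmps_Cons[intro]: "cmp n g G \<Longrightarrow> cmps n gs Gs \<Longrightarrow> cmps n (g # gs) (G # Gs)"
  by (auto simp: cmps_def nth_Cons split: nat.splits)

lemma cmp_Comp0: "cmp m f F \<Longrightarrow> cmps n gs Gs \<Longrightarrow> length gs = m \<Longrightarrow>
   cmp n (Comp f gs) (\<lambda>Or xs. F Or (map (\<lambda>G. G Or xs) Gs))"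
  unfolding cmp_def cmps_def
proof (intro allI impI)
  fix Or :: "nat \<Rightarrow> nat" and xs :: "nat list"
  assume a: "\<forall>Or xs. length xs = m \<longrightarrow> ev Or f xs (F Or xs)"
    "length gs = length Gs \<and> (\<forall>i<length gs. \<forall>Or xs. length xs = n \<longrightarrow> ev Or (gs ! i) xs ((Gs ! i) Or xs))"
    "length gs = m" "length xs = n"
  show "ev Or (Comp f gs) xs (F Or (map (\<lambda>G. G Or xs) Gs))"
    by (rule ev_comp[where ys="map (\<lambda>G. G Or xs) Gs"]) (use a in auto)
qed

fun prec :: "(nat list \<Rightarrow> nat) \<Rightarrow> (nat list \<Rightarrow> nat) \<Rightarrow> nat \<Rightarrow> nat list \<Rightarrow> nat" where
  "prec f g 0 ys = f ys"
| "prec f g (Suc m) ys = g (prec f g m ys # m # ys)"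

lemma cmp_Prim[intro]: "cmp n f F \<Longrightarrow> cmp (Suc (Suc n)) g G \<Longrightarrow>
   cmp (Suc n) (Prim f g) (\<lambda>Or xs. prec (F Or) (G Or) (xs ! 0) (tl xs))"
  unfolding cmp_def
proof (intro allI impI)
  fix Or :: "nat \<Rightarrow> nat" and xs :: "nat list" assume f: "\<forall>Or xs. length xs = n \<longrightarrow> ev Or f xs (F Or xs)"
    and g: "\<forall>Or xs. length xs = Suc (Suc n) \<longrightarrow> ev Or g xs (G Or xs)"
    and l: "length xs = Suc n"
  then obtain m ys where xs: "xs = m # ys" and ly: "length ys = n" by (cases xs) auto
  have "ev Or (Prim f g) (m # ys) (prec (F Or) (G Or) m ys)"
  proof (induction m)
    case 0 show ?case by (rule ev_prim0) (use f ly in auto)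
  next
    case (Suc m) show ?case by (rule ev_primS[OF Suc]) (use g ly in auto)
  qed
  then show "ev Or (Prim f g) xs (prec (F Or) (G Or) (xs ! 0) (tl xs))" by (simp add: xs)
qed

lemma cmp_Comp[intro]: "cmps n gs Gs \<Longrightarrow> cmp (length gs) f F \<Longrightarrow>
   cmp n (Comp f gs) (\<lambda>Or xs. F Or (map (\<lambda>G. G Or xs) Gs))"
  using cmp_Comp0 by blast

lemma cmp_Prim'[intro]: "cmp (n - 1) f F \<Longrightarrow> cmp (Suc n) g G \<Longrightarrow> 0 < n \<Longrightarrow>
   cmp n (Prim f g) (\<lambda>Or xs. prec (F Or) (G Or) (xs ! 0) (tl xs))"
  using cmp_Prim[of "n - 1" f F g G] by simp

lemma cmp_cong: "cmp n p F \<Longrightarrow> (\<And>Or xs. length xs = n \<Longrightarrow> F Or xs = F' Or xs) \<Longrightarrow> cmp n p F'"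
  unfolding cmp_def by metis

lemma cmp_Prim_char: "cmp (n - 1) f F \<Longrightarrow> cmp (Suc n) g G \<Longrightarrow> 0 < n \<Longrightarrow>
   (\<And>Or ys. length ys = n - 1 \<Longrightarrow> H Or (0 # ys) = F Or ys) \<Longrightarrow>
   (\<And>Or m ys. length ys = n - 1 \<Longrightarrow> H Or (Suc m # ys) = G Or (H Or (m # ys) # m # ys)) \<Longrightarrow>
   cmp n (Prim f g) H"
proof -
  assume a: "cmp (n - 1) f F" "cmp (Suc n) g G" "0 < n"
    and h0: "\<And>Or ys. length ys = n - 1 \<Longrightarrow> H Or (0 # ys) = F Or ys"
    and hS: "\<And>Or m ys. length ys = n - 1 \<Longrightarrow> H Or (Suc m # ys) = G Or (H Or (m # ys) # m # ys)"
  have c: "cmp n (Prim f g) (\<lambda>Or xs. prec (F Or) (G Or) (xs ! 0) (tl xs))" using a by (rule cmp_Prim')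
  show ?thesis
  proof (rule cmp_cong[OF c])
    fix Or :: "nat \<Rightarrow> nat" and xs :: "nat list" assume l: "length xs = n"
    then obtain m ys where xs: "xs = m # ys" and ly: "length ys = n - 1" using a(3) by (cases xs) auto
    have "prec (F Or) (G Or) m ys = H Or (m # ys)"
      by (induction m) (simp_all add: h0 hS ly)
    then show "prec (F Or) (G Or) (xs ! 0) (tl xs) = H Or xs" by (simp add: xs)
  qed
qed

named_theorems crules
declare cmp_zero[crules] cmp_proj[crules] cmp_succ[crules] cmp_orc[crules] cmps_Nil[crules]
  cmps_Cons[crules] cmp_Comp[crules] cmp_Prim'[crules]


primrec constp :: "nat \<Rightarrow> recf" where
  "constp 0 = Zero" | "constp (Suc c) = Comp Succ [constp c]"

lemma cmp_const[crules]: "cmp n (constp c) (\<lambda>Or xs. c)"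
proof (induction c)
  case 0 then show ?case by (simp add: cmp_zero)
next
  case (Suc c)
  show ?case by (simp, rule cmp_cong, (rule crules Suc | simp)+)
qed

lemmas lsc = length_Suc_conv numeral_eq_Suc

definition "r_add = Prim (Proj 0) (Comp Succ [Proj 0])"
lemma cmp_add[crules]: "n = 2 \<Longrightarrow> cmp n r_add (\<lambda>Or xs. xs!0 + xs!1)"
  unfolding r_add_def by (rule cmp_Prim_char, (rule crules | simp add: lsc)+)

definition "r_mult = Prim Zero (Comp r_add [Proj 0, Proj 2])"
lemma cmp_mult[crules]: "n = 2 \<Longrightarrow> cmp n r_mult (\<lambda>Or xs. xs!0 * xs!1)"
  unfolding r_mult_def by (rule cmp_Prim_char, (rule crules | simp add: lsc)+)

definition "r_pred = Prim Zero (Proj 1)"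
lemma cmp_pred[crules]: "n = 1 \<Longrightarrow> cmp n r_pred (\<lambda>Or xs. xs!0 - 1)"
  unfolding r_pred_def by (rule cmp_Prim_char, (rule crules | simp add: lsc)+)

definition "r_subr = Prim (Proj 0) (Comp r_pred [Proj 0])"
lemma cmp_subr[crules]: "n = 2 \<Longrightarrow> cmp n r_subr (\<lambda>Or xs. xs!1 - xs!0)"
  unfolding r_subr_def by (rule cmp_Prim_char, (rule crules | simp add: lsc)+)

definition "r_sub = Comp r_subr [Proj 1, Proj 0]"
lemma cmp_sub[crules]: "n = 2 \<Longrightarrow> cmp n r_sub (\<lambda>Or xs. xs!0 - xs!1)"
  unfolding r_sub_def by (rule cmp_cong, (rule crules | simp)+)

definition "r_ite = Prim (Proj 1) (Proj 2)"
lemma cmp_ite[crules]: "n = 3 \<Longrightarrow> cmp n r_ite (\<lambda>Or xs. if xs!0 = 0 then xs!2 else xs!1)"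
  unfolding r_ite_def by (rule cmp_Prim_char, (rule crules | simp add: lsc)+)

definition "r_sg = Comp r_ite [Proj 0, constp 1, constp 0]"
lemma cmp_sg[crules]: "n = 1 \<Longrightarrow> cmp n r_sg (\<lambda>Or xs. if xs!0 = 0 then 0 else 1)"
  unfolding r_sg_def by (rule cmp_cong, (rule crules | simp)+)

definition "r_eq = Comp r_ite [Comp r_add [Comp r_sub [Proj 0, Proj 1], Comp r_sub [Proj 1, Proj 0]], constp 0, constp 1]"
lemma cmp_eq[crules]: "n = 2 \<Longrightarrow> cmp n r_eq (\<lambda>Or xs. if xs!0 = xs!1 then 1 else 0)"
  unfolding r_eq_def by (rule cmp_cong, (rule crules | simp)+)

definition "r_le = Comp r_ite [Comp r_sub [Proj 0, Proj 1], constp 0, constp 1]"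
lemma cmp_le[crules]: "n = 2 \<Longrightarrow> cmp n r_le (\<lambda>Or xs. if xs!0 \<le> xs!1 then 1 else 0)"
  unfolding r_le_def by (rule cmp_cong, (rule crules | simp)+)

definition "r_mod = Prim Zero (Comp r_ite [Comp r_eq [Comp Succ [Proj 0], Proj 2], constp 0, Comp Succ [Proj 0]])"
lemma cmp_mod[crules]: "n = 2 \<Longrightarrow> cmp n r_mod (\<lambda>Or xs. xs!0 mod xs!1)"
  unfolding r_mod_def by (rule cmp_Prim_char, (rule crules | simp add: lsc mod_Suc)+)

definition "r_div = Prim Zero (Comp r_ite [Comp r_mod [Comp Succ [Proj 1], Proj 2], Proj 0, Comp Succ [Proj 0]])"
lemma cmp_div[crules]: "n = 2 \<Longrightarrow> cmp n r_div (\<lambda>Or xs. xs!0 div xs!1)"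
  unfolding r_div_def by (rule cmp_Prim_char, (rule crules | simp add: lsc div_Suc)+)

definition "r_powr = Prim (constp 1) (Comp r_mult [Proj 0, Proj 2])"
lemma cmp_powr[crules]: "n = 2 \<Longrightarrow> cmp n r_powr (\<lambda>Or xs. xs!1 ^ xs!0)"
  unfolding r_powr_def by (rule cmp_Prim_char, (rule crules | simp add: lsc)+)

definition "r_pow = Comp r_powr [Proj 1, Proj 0]"
lemma cmp_pow[crules]: "n = 2 \<Longrightarrow> cmp n r_pow (\<lambda>Or xs. xs!0 ^ xs!1)"
  unfolding r_pow_def by (rule cmp_cong, (rule crules | simp)+)



lemma tri_mono: "a \<le> b \<Longrightarrow> triangle a \<le> triangle b"
  by (induction b) (auto simp: le_Suc_eq)

lemma tri_ge: "n \<le> triangle n"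
  by (induction n) auto

lemma ex_T: "\<exists>T. triangle T \<le> c \<and> c < triangle (Suc T)"
proof (induction c)
  case 0 show ?case by (rule exI[of _ 0]) simp
next
  case (Suc c)
  then obtain T where T: "triangle T \<le> c" "c < triangle (Suc T)" by blast
  show ?case
  proof (cases "Suc c < triangle (Suc T)")
    case True then show ?thesis using T by (intro exI[of _ T]) simp
  next
    case False then show ?thesis using T by (intro exI[of _ "Suc T"]) simp
  qed
qed

definition troot :: "nat \<Rightarrow> nat" where
  "troot c = (\<Sum>t<c. if triangle (Suc t) \<le> c then 1 else 0)"

lemma troot_prop: "triangle (troot c) \<le> c \<and> c < triangle (Suc (troot c))"
proof -
  obtain T where T: "triangle T \<le> c" "c < triangle (Suc T)" using ex_T by blast
  have Tc: "T \<le> c" using tri_ge[of T] T by simp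
  have "{..<c} \<inter> {t. triangle (Suc t) \<le> c} = {..<T}"
  proof (intro subset_antisym subsetI)
    fix t assume "t \<in> {..<c} \<inter> {t. triangle (Suc t) \<le> c}"
    then have "triangle (Suc t) \<le> c" by simp
    then show "t \<in> {..<T}"
      using tri_mono[of "Suc T" "Suc t"] T by (cases "t < T") auto
  next
    fix t assume "t \<in> {..<T}"
    then show "t \<in> {..<c} \<inter> {t. triangle (Suc t) \<le> c}"
      using tri_mono[of "Suc t" T] T Tc by auto
  qed
  then have "troot c = T"
    unfolding troot_def by (simp add: sum.If_cases del: triangle_Suc)
  then show ?thesis using T by simp
qed

lemma prod_decode_troot:
  "prod_decode c = (c - triangle (troot c), troot c - (c - triangle (troot c)))"
proof -
  let ?T = "troot c"
  let ?a = "c - triangle ?T"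
  have t1: "triangle ?T \<le> c" and t2: "c < triangle (Suc ?T)" using troot_prop[of c] by auto
  have le: "?a \<le> ?T" using t1 t2 by simp
  have "prod_encode (?a, ?T - ?a) = c"
    using le troot_prop[of c] by (simp add: prod_encode_def)
  then show ?thesis by (metis prod_encode_inverse)
qed

definition "r_tri = Prim Zero (Comp r_add [Proj 0, Comp Succ [Proj 1]])"
lemma cmp_tri[crules]: "n = 1 \<Longrightarrow> cmp n r_tri (\<lambda>Or xs. triangle (xs!0))"
  unfolding r_tri_def by (rule cmp_Prim_char, (rule crules | simp add: lsc)+)

definition "r_penc = Comp r_add [Comp r_tri [Comp r_add [Proj 0, Proj 1]], Proj 0]"
lemma cmp_penc[crules]: "n = 2 \<Longrightarrow> cmp n r_penc (\<lambda>Or xs. prod_encode (xs!0, xs!1))"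
  unfolding r_penc_def by (rule cmp_cong, (rule crules | simp add: prod_encode_def)+)

definition "r_trootr = Prim Zero (Comp r_add [Proj 0, Comp r_le [Comp r_tri [Comp Succ [Proj 1]], Proj 2]])"
lemma cmp_trootr[crules]: "n = 2 \<Longrightarrow> cmp n r_trootr (\<lambda>Or xs. \<Sum>t<xs!0. if triangle (Suc t) \<le> xs!1 then 1 else 0)"
  unfolding r_trootr_def by (rule cmp_Prim_char, (rule crules | simp add: lsc)+)

definition "r_troot = Comp r_trootr [Proj 0, Proj 0]"
lemma cmp_troot[crules]: "n = 1 \<Longrightarrow> cmp n r_troot (\<lambda>Or xs. troot (xs!0))"
  unfolding r_troot_def by (rule cmp_cong, (rule crules | simp add: troot_def)+)

definition "r_pfst = Comp r_sub [Proj 0, Comp r_tri [Comp r_troot [Proj 0]]]"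
lemma cmp_pfst[crules]: "n = 1 \<Longrightarrow> cmp n r_pfst (\<lambda>Or xs. fst (prod_decode (xs!0)))"
  unfolding r_pfst_def by (rule cmp_cong, (rule crules | simp add: prod_decode_troot[of "xs!0" for xs])+)

definition "r_psnd = Comp r_sub [Comp r_troot [Proj 0], Comp r_pfst [Proj 0]]"
lemma cmp_psnd[crules]: "n = 1 \<Longrightarrow> cmp n r_psnd (\<lambda>Or xs. snd (prod_decode (xs!0)))"
  unfolding r_psnd_def by (rule cmp_cong, (rule crules | simp add: prod_decode_troot[of "xs!0" for xs])+)

definition hdc :: "nat \<Rightarrow> nat" where "hdc c = fst (prod_decode (c - 1))"
definition tlc :: "nat \<Rightarrow> nat" where "tlc c = snd (prod_decode (c - 1))"
definition nthc :: "nat \<Rightarrow> nat \<Rightarrow> nat" where "nthc c i = hdc ((tlc ^^ i) c)"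
definition lenc :: "nat \<Rightarrow> nat" where "lenc c = (\<Sum>t<c. if (tlc ^^ t) c = 0 then 0 else 1)"

lemma hdc_enc[simp]: "hdc (Suc (prod_encode (x, y))) = x" by (simp add: hdc_def)
lemma tlc_enc[simp]: "tlc (Suc (prod_encode (x, y))) = y" by (simp add: tlc_def)

lemma tlc_pow_enc: "i \<le> length xs \<Longrightarrow> (tlc ^^ i) (list_encode xs) = list_encode (drop i xs)"
proof (induction i arbitrary: xs)
  case 0 then show ?case by simp
next
  case (Suc i)
  then obtain y ys where xs: "xs = y # ys" by (cases xs) auto
  have "(tlc ^^ Suc i) (list_encode xs) = (tlc ^^ i) (tlc (list_encode xs))"
    by (simp add: funpow_Suc_right del: funpow.simps)
  also have "\<dots> = list_encode (drop (Suc i) xs)" using Suc by (simp add: xs)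
  finally show ?case .
qed

lemma nthc_enc[simp]: "i < length xs \<Longrightarrow> nthc (list_encode xs) i = xs ! i"
proof -
  assume i: "i < length xs"
  have d: "drop i xs = xs!i # drop (Suc i) xs" using i by (simp add: Cons_nth_drop_Suc)
  show ?thesis unfolding nthc_def using i by (simp add: tlc_pow_enc d)
qed

lemma length_le_enc: "length xs \<le> list_encode xs"
proof (induction xs)
  case (Cons x xs) then show ?case using le_prod_encode_2[of "list_encode xs" x] by simp
qed simp

lemma list_encode_eq0: "list_encode xs = 0 \<longleftrightarrow> xs = []"
  by (cases xs) auto

lemma lenc_enc[simp]: "lenc (list_encode xs) = length xs"
proof -
  let ?c = "list_encode xs"
  have "\<And>t. t < ?c \<Longrightarrow> ((tlc ^^ t) ?c = 0) = (\<not> t < length xs)"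
  proof -
    fix t assume "t < ?c"
    show "((tlc ^^ t) ?c = 0) = (\<not> t < length xs)"
    proof (cases "t \<le> length xs")
      case True then show ?thesis by (auto simp add: tlc_pow_enc list_encode_eq0)
    next
      case False
      define d where "d = t - length xs - 1"
      have "t = length xs + Suc d" using False by (simp add: d_def)
      then have "(tlc ^^ t) ?c = (tlc ^^ Suc d) ((tlc ^^ length xs) ?c)"
        by (simp add: funpow_add add.commute)
      also have "\<dots> = 0"
      proof -
        have pd0: "prod_decode 0 = (0, 0)" using prod_encode_inverse[of "(0,0)"] by (simp add: prod_encode_def)
        have z: "(tlc ^^ k) 0 = 0" for k by (induction k) (auto simp: tlc_def pd0)
        show ?thesis by (simp add: tlc_pow_enc z del: funpow.simps)
      qed
      finally show ?thesis using False by simp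
    qed
  qed
  then have "lenc ?c = (\<Sum>t<?c. if t < length xs then 1 else 0)"
    unfolding lenc_def by (intro sum.cong) auto
  also have "\<dots> = card ({..<?c} \<inter> {t. t < length xs})" by (simp add: sum.If_cases)
  also have "{..<?c} \<inter> {t. t < length xs} = {..<length xs}" using length_le_enc[of xs] by auto
  finally show ?thesis by simp
qed

definition "r_hd = Comp r_pfst [Comp r_pred [Proj 0]]"
lemma cmp_hd[crules]: "n = 1 \<Longrightarrow> cmp n r_hd (\<lambda>Or xs. hdc (xs!0))"
  unfolding r_hd_def by (rule cmp_cong, (rule crules | simp add: hdc_def)+)

definition "r_tl = Comp r_psnd [Comp r_pred [Proj 0]]"
lemma cmp_tl[crules]: "n = 1 \<Longrightarrow> cmp n r_tl (\<lambda>Or xs. tlc (xs!0))"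
  unfolding r_tl_def by (rule cmp_cong, (rule crules | simp add: tlc_def)+)

definition "r_tlitr = Prim (Proj 0) (Comp r_tl [Proj 0])"
lemma cmp_tlitr[crules]: "n = 2 \<Longrightarrow> cmp n r_tlitr (\<lambda>Or xs. (tlc ^^ (xs!0)) (xs!1))"
  unfolding r_tlitr_def by (rule cmp_Prim_char, (rule crules | simp add: lsc)+)

definition "r_nth = Comp r_hd [Comp r_tlitr [Proj 1, Proj 0]]"
lemma cmp_nth[crules]: "n = 2 \<Longrightarrow> cmp n r_nth (\<lambda>Or xs. nthc (xs!0) (xs!1))"
  unfolding r_nth_def by (rule cmp_cong, (rule crules | simp add: nthc_def)+)

definition "r_lenr = Prim Zero (Comp r_add [Proj 0, Comp r_sg [Comp r_tlitr [Proj 1, Proj 2]]])"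
lemma cmp_lenr[crules]: "n = 2 \<Longrightarrow> cmp n r_lenr (\<lambda>Or xs. \<Sum>t<xs!0. if (tlc ^^ t) (xs!1) = 0 then 0 else 1)"
  unfolding r_lenr_def by (rule cmp_Prim_char, (rule crules | simp add: lsc)+)

definition "r_len = Comp r_lenr [Proj 0, Proj 0]"
lemma cmp_len[crules]: "n = 1 \<Longrightarrow> cmp n r_len (\<lambda>Or xs. lenc (xs!0))"
  unfolding r_len_def by (rule cmp_cong, (rule crules | simp add: lenc_def)+)

definition "r_cons = Comp Succ [Comp r_penc [Proj 0, Proj 1]]"
lemma cmp_cons[crules]: "n = 2 \<Longrightarrow> cmp n r_cons (\<lambda>Or xs. Suc (prod_encode (xs!0, xs!1)))"
  unfolding r_cons_def by (rule cmp_cong, (rule crules | simp)+)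


definition projs :: "nat \<Rightarrow> nat \<Rightarrow> recf list" where
  "projs k m = map (\<lambda>i. Proj (i + k)) [0..<m]"

lemma length_projs[simp]: "length (projs k m) = m" by (simp add: projs_def)

definition nthfs :: "nat \<Rightarrow> nat \<Rightarrow> ((nat \<Rightarrow> nat) \<Rightarrow> nat list \<Rightarrow> nat) list" where
  "nthfs k m = map (\<lambda>i Or xs. xs ! (i + k)) [0..<m]"

lemma cmps_projs[crules]: "k + m \<le> n \<Longrightarrow> cmps n (projs k m) (nthfs k m)"
  unfolding cmps_def projs_def nthfs_def by (auto intro: cmp_proj)

lemma map_nthfs_eval[simp]: "length xs = k + m \<Longrightarrow> map (\<lambda>G. G Or xs) (nthfs k m) = drop k xs"
  unfolding nthfs_def by (rule nth_equalityI) (auto simp: add.commute)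

fun glf :: "(nat list \<Rightarrow> nat) \<Rightarrow> nat \<Rightarrow> nat list \<Rightarrow> nat \<Rightarrow> nat" where
  "glf F len ps 0 = 0"
| "glf F len ps (Suc r) = Suc (prod_encode (F ((len - r - 1) # ps), glf F len ps r))"

lemma glf_eq: "r \<le> len \<Longrightarrow> glf F len ps r = list_encode (map (\<lambda>i. F (i # ps)) [len - r..<len])"
proof (induction r)
  case 0 then show ?case by simp
next
  case (Suc r)
  have u: "[len - Suc r..<len] = (len - Suc r) # [len - r..<len]"
    using Suc.prems by (simp add: upt_conv_Cons Suc_diff_Suc)
  show ?case using Suc by (simp add: u)
qed

definition genl :: "nat \<Rightarrow> recf \<Rightarrow> recf" where
  "genl m f = Comp (Prim Zero (Comp r_cons [Comp f (Comp r_sub [Comp r_sub [Proj 2, Proj 1], constp 1] # projs 3 m), Proj 0]))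
      (Proj 0 # Proj 0 # projs 1 m)"

lemma cmp_genl:
  assumes f: "\<And>n. n = Suc m \<Longrightarrow> cmp n f F" and n: "n = Suc m"
  shows "cmp n (genl m f) (\<lambda>Or xs. list_encode (map (\<lambda>i. F Or (i # tl xs)) [0..<xs!0]))"
proof -
  have body: "cmp (Suc (Suc (Suc m))) (Comp r_cons [Comp f (Comp r_sub [Comp r_sub [Proj 2, Proj 1], constp 1] # projs 3 m), Proj 0])
     (\<lambda>Or xs. Suc (prod_encode (F Or ((xs!2 - xs!1 - 1) # drop 3 xs), xs!0)))"
    by (rule cmp_cong, (rule crules f | simp)+)
  have inner: "cmp (Suc (Suc m)) (Prim Zero (Comp r_cons [Comp f (Comp r_sub [Comp r_sub [Proj 2, Proj 1], constp 1] # projs 3 m), Proj 0]))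
     (\<lambda>Or xs. glf (F Or) (xs!1) (drop 2 xs) (xs!0))"
    by (rule cmp_Prim_char[OF _ body], (rule crules | simp)+)
  have inner': "\<And>n'. n' = Suc (Suc m) \<Longrightarrow> cmp n' (Prim Zero (Comp r_cons [Comp f (Comp r_sub [Comp r_sub [Proj 2, Proj 1], constp 1] # projs 3 m), Proj 0]))
     (\<lambda>Or xs. glf (F Or) (xs!1) (drop 2 xs) (xs!0))" using inner by simp
  show ?thesis unfolding genl_def n
    by (rule cmp_cong, (rule inner' | rule crules | simp add: glf_eq drop_Suc)+)
qed

lemma cmp_genl'[crules]: "(\<And>n. n = Suc m \<Longrightarrow> cmp n f F) \<Longrightarrow> n = Suc m \<Longrightarrow>
   cmp n (genl m f) (\<lambda>Or xs. list_encode (map (\<lambda>i. F Or (i # tl xs)) [0..<xs!0]))"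
  by (rule cmp_genl)

definition prodl :: "nat \<Rightarrow> recf \<Rightarrow> recf" where
  "prodl m f = Prim (constp 1) (Comp r_mult [Proj 0, Comp f (Proj 1 # projs 2 m)])"

lemma cmp_prodl[crules]:
  assumes f: "\<And>n. n = Suc m \<Longrightarrow> cmp n f F" and n: "n = Suc m"
  shows "cmp n (prodl m f) (\<lambda>Or xs. \<Prod>i<xs!0. F Or (i # tl xs))"
  unfolding prodl_def n
  by (rule cmp_Prim_char, (rule crules f | simp add: lsc)+)


definition entryf :: "nat \<Rightarrow> nat \<Rightarrow> nat \<Rightarrow> nat \<Rightarrow> nat \<Rightarrow> nat \<Rightarrow> nat" where
  "entryf cl r a x j c =
    (if (cl mod Suc j = r mod Suc j \<or> cl mod Suc j = Suc (r mod Suc j)) \<and> cl mod Suc j \<noteq> 0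
        \<and> a = (x div (nthc c 1) ^ (cl mod Suc j - 1)) mod (nthc c 1)
     then nthc (nthc (nthc (nthc (nthc c 2) a) 2) (r div Suc j)) (cl div Suc j) else 3)"

definition rowf :: "nat \<Rightarrow> nat \<Rightarrow> nat \<Rightarrow> nat \<Rightarrow> nat \<Rightarrow> nat" where
  "rowf r a x j c = list_encode (map (\<lambda>cl. entryf cl r a x j c) [0..<nthc c 0 * Suc j])"

definition matf :: "nat \<Rightarrow> nat \<Rightarrow> nat \<Rightarrow> nat \<Rightarrow> nat" where
  "matf a x j c = list_encode [nthc c 0 * Suc j, nthc c 0 * Suc j,
      list_encode (map (\<lambda>r. rowf r a x j c) [0..<nthc c 0 * Suc j])]"

definition Tf :: "nat \<Rightarrow> nat \<Rightarrow> nat \<Rightarrow> nat" where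
  "Tf x j c = list_encode (map (\<lambda>a. matf a x j c) [0..<nthc c 1])"

definition Ff :: "nat \<Rightarrow> nat \<Rightarrow> nat" where
  "Ff j c = list_encode (map (\<lambda>i. nthc (nthc c 3) i * Suc j + j) [0..<lenc (nthc c 3)])"

definition codef :: "nat \<Rightarrow> nat \<Rightarrow> nat \<Rightarrow> nat" where
  "codef x j c = list_encode [nthc c 0 * Suc j, nthc c 1, Tf x j c, Ff j c, nthc c 4 * Suc j, nthc c 5 * Suc j]"

definition mainf :: "(nat \<Rightarrow> nat) \<Rightarrow> nat \<Rightarrow> nat" where
  "mainf Or c = (\<Prod>j<Suc (2 * nthc c 0). \<Prod>x<nthc c 1 ^ j. Or (codef x j c))"

(* entry: args [cl, r, a, x, j, c] *)
definition "e_J = Comp Succ [Proj 4]"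
definition "e_k = Comp r_nth [Proj 5, constp 1]"
definition "e_i = Comp r_mod [Proj 1, e_J]"
definition "e_i' = Comp r_mod [Proj 0, e_J]"
definition "e_letter = Comp r_mod [Comp r_div [Proj 3, Comp r_pow [e_k, Comp r_pred [e_i']]], e_k]"
definition "e_cond = Comp r_mult [Comp r_sg [Comp r_add [Comp r_eq [e_i', e_i], Comp r_eq [e_i', Comp Succ [e_i]]]],
   Comp r_mult [Comp r_sg [e_i'], Comp r_eq [Proj 2, e_letter]]]"
definition "e_val = Comp r_nth [Comp r_nth [Comp r_nth [Comp r_nth [Comp r_nth [Proj 5, constp 2], Proj 2], constp 2],
   Comp r_div [Proj 1, e_J]], Comp r_div [Proj 0, e_J]]"
definition "r_entry = Comp r_ite [e_cond, e_val, constp 3]"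

lemma cmp_eJ[crules]: "n = 6 \<Longrightarrow> cmp n e_J (\<lambda>Or xs. Suc (xs!4))"
  unfolding e_J_def by (rule cmp_cong, (rule crules | simp)+)
lemma cmp_ek[crules]: "n = 6 \<Longrightarrow> cmp n e_k (\<lambda>Or xs. nthc (xs!5) 1)"
  unfolding e_k_def by (rule cmp_cong, (rule crules | simp)+)
lemma cmp_ei[crules]: "n = 6 \<Longrightarrow> cmp n e_i (\<lambda>Or xs. xs!1 mod Suc (xs!4))"
  unfolding e_i_def by (rule cmp_cong, (rule crules | simp)+)
lemma cmp_ei'[crules]: "n = 6 \<Longrightarrow> cmp n e_i' (\<lambda>Or xs. xs!0 mod Suc (xs!4))"
  unfolding e_i'_def by (rule cmp_cong, (rule crules | simp)+)
lemma cmp_eletter[crules]: "n = 6 \<Longrightarrow> cmp n e_letter (\<lambda>Or xs. (xs!3 div (nthc (xs!5) 1) ^ (xs!0 mod Suc (xs!4) - 1)) mod (nthc (xs!5) 1))"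
  unfolding e_letter_def by (rule cmp_cong, (rule crules | simp)+)
lemma cmp_econd[crules]: "n = 6 \<Longrightarrow> cmp n e_cond (\<lambda>Or xs. if (xs!0 mod Suc (xs!4) = xs!1 mod Suc (xs!4) \<or> xs!0 mod Suc (xs!4) = Suc (xs!1 mod Suc (xs!4))) \<and> xs!0 mod Suc (xs!4) \<noteq> 0
        \<and> xs!2 = (xs!3 div (nthc (xs!5) 1) ^ (xs!0 mod Suc (xs!4) - 1)) mod (nthc (xs!5) 1) then 1 else 0)"
  unfolding e_cond_def by (rule cmp_cong, (rule crules | simp)+)
lemma cmp_eval[crules]: "n = 6 \<Longrightarrow> cmp n e_val (\<lambda>Or xs. nthc (nthc (nthc (nthc (nthc (xs!5) 2) (xs!2)) 2) (xs!1 div Suc (xs!4))) (xs!0 div Suc (xs!4)))"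
  unfolding e_val_def by (rule cmp_cong, (rule crules | simp)+)
lemma cmp_entry[crules]: "n = 6 \<Longrightarrow> cmp n r_entry (\<lambda>Or xs. entryf (xs!0) (xs!1) (xs!2) (xs!3) (xs!4) (xs!5))"
  unfolding r_entry_def entryf_def by (rule cmp_cong, (rule crules | simp)+)

(* row: args [r, a, x, j, c] *)
definition "r_N5 = Comp r_mult [Comp r_nth [Proj 4, constp 0], Comp Succ [Proj 3]]"
lemma cmp_N5[crules]: "n = 5 \<Longrightarrow> cmp n r_N5 (\<lambda>Or xs. nthc (xs!4) 0 * Suc (xs!3))"
  unfolding r_N5_def by (rule cmp_cong, (rule crules | simp)+)
definition "r_row = Comp (genl 5 r_entry) [r_N5, Proj 0, Proj 1, Proj 2, Proj 3, Proj 4]"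
lemma cmp_row[crules]: "n = 5 \<Longrightarrow> cmp n r_row (\<lambda>Or xs. rowf (xs!0) (xs!1) (xs!2) (xs!3) (xs!4))"
  unfolding r_row_def rowf_def by (rule cmp_cong, (rule crules | simp)+)

(* mat: args [a, x, j, c] *)
definition "r_N4 = Comp r_mult [Comp r_nth [Proj 3, constp 0], Comp Succ [Proj 2]]"
lemma cmp_N4[crules]: "n = 4 \<Longrightarrow> cmp n r_N4 (\<lambda>Or xs. nthc (xs!3) 0 * Suc (xs!2))"
  unfolding r_N4_def by (rule cmp_cong, (rule crules | simp)+)
definition "r_mat = Comp r_cons [r_N4, Comp r_cons [r_N4, Comp r_cons [Comp (genl 4 r_row) [r_N4, Proj 0, Proj 1, Proj 2, Proj 3], Zero]]]"
lemma cmp_mat[crules]: "n = 4 \<Longrightarrow> cmp n r_mat (\<lambda>Or xs. matf (xs!0) (xs!1) (xs!2) (xs!3))"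
  unfolding r_mat_def matf_def by (rule cmp_cong, (rule crules | simp)+)

(* T: args [x, j, c] *)
definition "r_T = Comp (genl 3 r_mat) [Comp r_nth [Proj 2, constp 1], Proj 0, Proj 1, Proj 2]"
lemma cmp_T[crules]: "n = 3 \<Longrightarrow> cmp n r_T (\<lambda>Or xs. Tf (xs!0) (xs!1) (xs!2))"
  unfolding r_T_def Tf_def by (rule cmp_cong, (rule crules | simp)+)

(* F body: args [i, j, c]; F: args [j, c] *)
definition "r_Fb = Comp r_add [Comp r_mult [Comp r_nth [Comp r_nth [Proj 2, constp 3], Proj 0], Comp Succ [Proj 1]], Proj 1]"
lemma cmp_Fb[crules]: "n = 3 \<Longrightarrow> cmp n r_Fb (\<lambda>Or xs. nthc (nthc (xs!2) 3) (xs!0) * Suc (xs!1) + xs!1)"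
  unfolding r_Fb_def by (rule cmp_cong, (rule crules | simp)+)
definition "r_F = Comp (genl 2 r_Fb) [Comp r_len [Comp r_nth [Proj 1, constp 3]], Proj 0, Proj 1]"
lemma cmp_F[crules]: "n = 2 \<Longrightarrow> cmp n r_F (\<lambda>Or xs. Ff (xs!0) (xs!1))"
  unfolding r_F_def Ff_def by (rule cmp_cong, (rule crules | simp)+)

(* code: args [x, j, c] *)
definition "r_J3 = Comp Succ [Proj 1]"
definition "r_code = Comp r_cons [Comp r_mult [Comp r_nth [Proj 2, constp 0], r_J3],
  Comp r_cons [Comp r_nth [Proj 2, constp 1],
  Comp r_cons [r_T,
  Comp r_cons [Comp r_F [Proj 1, Proj 2],
  Comp r_cons [Comp r_mult [Comp r_nth [Proj 2, constp 4], r_J3],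
  Comp r_cons [Comp r_mult [Comp r_nth [Proj 2, constp 5], r_J3], Zero]]]]]]"
lemma cmp_J3[crules]: "n = 3 \<Longrightarrow> cmp n r_J3 (\<lambda>Or xs. Suc (xs!1))"
  unfolding r_J3_def by (rule cmp_cong, (rule crules | simp)+)
lemma cmp_code[crules]: "n = 3 \<Longrightarrow> cmp n r_code (\<lambda>Or xs. codef (xs!0) (xs!1) (xs!2))"
  unfolding r_code_def codef_def by (rule cmp_cong, (rule crules | simp)+)

definition "r_inner = Comp Orc [r_code]"
lemma cmp_inner[crules]: "n = 3 \<Longrightarrow> cmp n r_inner (\<lambda>Or xs. Or (codef (xs!0) (xs!1) (xs!2)))"
  unfolding r_inner_def by (rule cmp_cong, (rule crules | simp)+)

(* mid: args [j, c] *)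
definition "r_mid = Comp (prodl 2 r_inner) [Comp r_pow [Comp r_nth [Proj 1, constp 1], Proj 0], Proj 0, Proj 1]"
lemma cmp_mid[crules]: "n = 2 \<Longrightarrow> cmp n r_mid (\<lambda>Or xs. \<Prod>x<nthc (xs!1) 1 ^ (xs!0). Or (codef x (xs!0) (xs!1)))"
  unfolding r_mid_def by (rule cmp_cong, (rule crules | simp)+)

definition "r_main = Comp (prodl 1 r_mid) [Comp Succ [Comp r_mult [constp 2, Comp r_nth [Proj 0, constp 0]]], Proj 0]"
lemma cmp_main: "cmp 1 r_main (\<lambda>Or xs. mainf Or (xs!0))"
  unfolding r_main_def mainf_def by (rule cmp_cong, (rule crules | simp)+)

lemma ev_main: "ev Or r_main [c] r \<longleftrightarrow> r = mainf Or c"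
proof
  have e: "ev Or r_main [c] (mainf Or c)" using cmp_main[unfolded cmp_def, rule_format, of "[c]" Or] by simp
  show "ev Or r_main [c] r \<Longrightarrow> r = mainf Or c" using ev_det e by blast
  show "r = mainf Or c \<Longrightarrow> ev Or r_main [c] r" using e by simp
qed


definition prodm :: "wa \<Rightarrow> nat list \<Rightarrow> rat mat" where
  "prodm A w = foldr (*) (map (trans A) w) (1\<^sub>m (nstates A))"

lemma nu_prodm: "nu A s w = (\<Sum>t\<in>final A. prodm A w $$ (s, t))"
  by (simp add: nu_def prodm_def)

lemma prodm_Nil: "prodm A [] = 1\<^sub>m (nstates A)" by (simp add: prodm_def)
lemma prodm_Cons: "prodm A (a # w) = trans A a * prodm A w" by (simp add: prodm_def)

lemma wf_trans: "wf_wa A \<Longrightarrow> a < nletters A \<Longrightarrow> trans A a \<in> carrier_mat (nstates A) (nstates A)"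
  by (simp add: wf_wa_def)

lemma wf_nonneg: "wf_wa A \<Longrightarrow> a < nletters A \<Longrightarrow> i < nstates A \<Longrightarrow> j < nstates A \<Longrightarrow> trans A a $$ (i, j) \<ge> 0"
  by (simp add: wf_wa_def)

lemma prodm_carrier: "wf_wa A \<Longrightarrow> set w \<subseteq> {..<nletters A} \<Longrightarrow> prodm A w \<in> carrier_mat (nstates A) (nstates A)"
  by (induction w) (auto simp: prodm_Nil prodm_Cons intro!: mult_carrier_mat wf_trans)

lemma prodm_Cons_idx:
  assumes "wf_wa A" "a < nletters A" "set w \<subseteq> {..<nletters A}" "q < nstates A" "q'' < nstates A"
  shows "prodm A (a # w) $$ (q, q'') = (\<Sum>q'<nstates A. trans A a $$ (q, q') * prodm A w $$ (q', q''))"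
proof -
  have c1: "trans A a \<in> carrier_mat (nstates A) (nstates A)" using assms wf_trans by blast
  have c2: "prodm A w \<in> carrier_mat (nstates A) (nstates A)" using assms prodm_carrier by blast
  show ?thesis using c1 c2 assms(4,5)
    by (auto simp: prodm_Cons scalar_prod_def atLeast0LessThan intro!: sum.cong)
qed

lemma prodm_Nil_idx: "q < nstates A \<Longrightarrow> q' < nstates A \<Longrightarrow> prodm A [] $$ (q, q') = (if q = q' then 1 else 0)"
  by (simp add: prodm_Nil)

lemma prodm_nonneg:
  assumes "wf_wa A" "set w \<subseteq> {..<nletters A}" "q < nstates A" "q' < nstates A"
  shows "prodm A w $$ (q, q') \<ge> 0"
  using assms
proof (induction w arbitrary: q)
  case Nil then show ?case by (simp add: prodm_Nil_idx)
next
  case (Cons a w)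
  then show ?case
    by (simp add: prodm_Cons_idx, intro sum_nonneg mult_nonneg_nonneg) (auto intro: wf_nonneg)
qed

lemma nu_nonneg: "wf_wa A \<Longrightarrow> s < nstates A \<Longrightarrow> w \<in> words A \<Longrightarrow> nu A s w \<ge> 0"
  unfolding nu_prodm words_def wf_wa_def[of A]
  by (intro sum_nonneg prodm_nonneg) (auto simp: wf_wa_def)

definition pos :: "wa \<Rightarrow> nat \<Rightarrow> nat list \<Rightarrow> nat \<Rightarrow> bool" where
  "pos A q u q' \<longleftrightarrow> q < nstates A \<and> q' < nstates A \<and> set u \<subseteq> {..<nletters A} \<and> prodm A u $$ (q, q') > 0"

lemma pos_Nil: "pos A q [] q' \<longleftrightarrow> q < nstates A \<and> q = q'"
  by (auto simp: pos_def prodm_Nil_idx split: if_splits)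

lemma pos_Cons:
  assumes "wf_wa A"
  shows "pos A q (a # u) q'' \<longleftrightarrow> (\<exists>q'. pos A q [a] q' \<and> pos A q' u q'')"
proof
  assume p: "pos A q (a # u) q''"
  then have h: "q < nstates A" "q'' < nstates A" "a < nletters A" "set u \<subseteq> {..<nletters A}"
    by (auto simp: pos_def)
  have "0 < (\<Sum>q'<nstates A. trans A a $$ (q, q') * prodm A u $$ (q', q''))"
    using p prodm_Cons_idx[OF assms h(3) h(4) h(1) h(2)] by (simp add: pos_def)
  then have "\<exists>q'\<in>{..<nstates A}. 0 < trans A a $$ (q, q') * prodm A u $$ (q', q'')"
  proof (rule contrapos_pp)
    assume "\<not> (\<exists>q'\<in>{..<nstates A}. 0 < trans A a $$ (q, q') * prodm A u $$ (q', q''))"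
    then have "(\<Sum>q'<nstates A. trans A a $$ (q, q') * prodm A u $$ (q', q'')) \<le> 0"
      by (intro sum_nonpos) (auto simp: not_less)
    then show "\<not> 0 < (\<Sum>q'<nstates A. trans A a $$ (q, q') * prodm A u $$ (q', q''))" by simp
  qed
  then obtain q' where q': "q' < nstates A" "0 < trans A a $$ (q, q') * prodm A u $$ (q', q'')"
    by blast
  have nn: "trans A a $$ (q, q') \<ge> 0" "prodm A u $$ (q', q'') \<ge> 0"
    using wf_nonneg[OF assms] prodm_nonneg[OF assms] h q' by auto
  have "trans A a $$ (q, q') > 0" "prodm A u $$ (q', q'') > 0"
    using q'(2) nn by (auto simp: zero_less_mult_iff)
  moreover have "prodm A [a] $$ (q, q') = trans A a $$ (q, q')"
    using prodm_Cons_idx[OF assms h(3), of "[]" q q'] h q' by (simp add: prodm_Nil_idx if_distrib cong: if_cong)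
  ultimately show "\<exists>q'. pos A q [a] q' \<and> pos A q' u q''" using h q' by (auto simp: pos_def)
next
  assume "\<exists>q'. pos A q [a] q' \<and> pos A q' u q''"
  then obtain q' where p1: "pos A q [a] q'" and p2: "pos A q' u q''" by blast
  then have h: "q < nstates A" "q'' < nstates A" "a < nletters A" "set u \<subseteq> {..<nletters A}" "q' < nstates A"
    by (auto simp: pos_def)
  have e1: "prodm A [a] $$ (q, q') = trans A a $$ (q, q')"
    using prodm_Cons_idx[OF assms h(3), of "[]" q q'] h by (simp add: prodm_Nil_idx if_distrib cong: if_cong)
  have t: "0 < trans A a $$ (q, q') * prodm A u $$ (q', q'')" using p1 p2 e1 by (simp add: pos_def)
  have "0 < (\<Sum>q'<nstates A. trans A a $$ (q, q') * prodm A u $$ (q', q''))"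
  proof (rule ccontr)
    assume "\<not> ?thesis"
    moreover have "\<forall>x\<in>{..<nstates A}. 0 \<le> trans A a $$ (q, x) * prodm A u $$ (x, q'')"
      using wf_nonneg[OF assms] prodm_nonneg[OF assms] h by (auto intro: mult_nonneg_nonneg)
    ultimately have "trans A a $$ (q, q') * prodm A u $$ (q', q'') \<le> 0"
      using member_le_sum[of q' "{..<nstates A}" "\<lambda>x. trans A a $$ (q, x) * prodm A u $$ (x, q'')"] h
      by auto
    with t show False by simp
  qed
  then show "pos A q (a # u) q''" using h prodm_Cons_idx[OF assms h(3) h(4) h(1) h(2)] by (simp add: pos_def)
qed

lemma pos_app:
  assumes "wf_wa A"
  shows "pos A q (u @ v) q'' \<longleftrightarrow> (\<exists>q'. pos A q u q' \<and> pos A q' v q'')"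
proof (induction u arbitrary: q)
  case Nil
  show ?case
  proof
    assume "pos A q ([] @ v) q''"
    then show "\<exists>q'. pos A q [] q' \<and> pos A q' v q''" by (auto simp: pos_Nil pos_def prodm_Nil_idx)
  qed (auto simp: pos_Nil)
next
  case (Cons a u)
  have e1: "pos A q ((a # u) @ v) q'' \<longleftrightarrow> (\<exists>q1. pos A q [a] q1 \<and> pos A q1 (u @ v) q'')"
    using pos_Cons[OF assms, of q a "u @ v" q''] by simp
  have e2: "\<And>q'. pos A q (a # u) q' \<longleftrightarrow> (\<exists>q1. pos A q [a] q1 \<and> pos A q1 u q')"
    using pos_Cons[OF assms] by blast
  show ?case unfolding e1 e2 Cons by blast
qed

lemma pos_rep:
  assumes "wf_wa A" "pos A q y q"
  shows "pos A q (concat (replicate r y)) q"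
proof (induction r)
  case 0 then show ?case using assms by (simp add: pos_Nil pos_def prodm_Nil_idx)
next
  case (Suc r) then show ?case using assms pos_app by auto
qed

lemma nu_pos_iff:
  assumes "wf_wa A" "s < nstates A" "w \<in> words A"
  shows "nu A s w > 0 \<longleftrightarrow> (\<exists>t\<in>final A. pos A s w t)"
proof -
  have F: "final A \<subseteq> {..<nstates A}" and fin: "finite (final A)" using assms(1) by (auto simp: wf_wa_def intro: finite_subset)
  have nn: "\<forall>t\<in>final A. prodm A w $$ (s, t) \<ge> 0"
    using prodm_nonneg[OF assms(1)] assms F by (force simp: words_def)
  have "nu A s w > 0 \<longleftrightarrow> (\<exists>t\<in>final A. prodm A w $$ (s, t) > 0)"
  proof
    assume "0 < nu A s w"
    then show "\<exists>t\<in>final A. prodm A w $$ (s, t) > 0"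
      unfolding nu_prodm by (rule contrapos_pp) (auto simp: not_less intro: sum_nonpos)
  next
    assume "\<exists>t\<in>final A. prodm A w $$ (s, t) > 0"
    then obtain t where "t \<in> final A" "prodm A w $$ (s, t) > 0" by blast
    then show "nu A s w > 0" unfolding nu_prodm using nn fin by (intro sum_pos2) auto
  qed
  then show ?thesis using F assms by (auto simp: pos_def words_def)
qed


fun chg :: "nat list \<Rightarrow> nat" where
  "chg (a # b # w) = (if a = b then 0 else 1) + chg (b # w)"
| "chg _ = 0"

lemma chg_Cons_ge: "chg v \<le> chg (a # v)" by (cases v) auto

lemma chg_app: "chg u + chg v \<le> chg (u @ v)"
proof (induction u rule: chg.induct)
  case (1 a b w) then show ?case by simp
next
  case "2_1" then show ?case by simp
next
  case ("2_2" a) then show ?case using chg_Cons_ge[of v a] by simp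
qed

lemma chg_rep_app: "chg (replicate n a @ v) \<le> Suc (chg v)"
proof (induction n)
  case 0 then show ?case by simp
next
  case (Suc n)
  show ?case
  proof (cases n)
    case 0 then show ?thesis by (cases v) auto
  next
    case (Suc n') then show ?thesis using Suc.IH by simp
  qed
qed

lemma chg_star: "length ns = length as \<Longrightarrow> chg (concat (map2 (\<lambda>n a. replicate n a) ns as)) \<le> length as"
proof (induction ns as rule: list_induct2)
  case Nil then show ?case by simp
next
  case (Cons n ns a as)
  then show ?case using chg_rep_app[of n a "concat (map2 (\<lambda>n a. replicate n a) ns as)"] by simp
qed

lemma chg_pump: "r * chg y \<le> chg (concat (replicate r y))"
proof (induction r)
  case (Suc r) then show ?case using chg_app[of y "concat (replicate r y)"] by simp
qed simp

lemma chg_two: "a \<noteq> b \<Longrightarrow> 0 < n \<Longrightarrow> 0 < m \<Longrightarrow> 1 \<le> chg (replicate n a @ replicate m b @ z)"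
proof -
  assume h: "a \<noteq> b" "0 < n" "0 < m"
  have e: "replicate n a @ replicate m b @ z = replicate (n - 1) a @ (a # b # (replicate (m - 1) b @ z))"
    using h by (cases n; cases m) (auto simp: replicate_app_Cons_same replicate_append_same)
  show ?thesis unfolding e using chg_app[of "replicate (n - 1) a" "a # b # (replicate (m - 1) b @ z)"] h by simp
qed

lemma remdups_dec: "\<exists>ns. length ns = length (remdups_adj w) \<and> (\<forall>n\<in>set ns. 0 < n)
   \<and> w = concat (map2 (\<lambda>n a. replicate n a) ns (remdups_adj w))"
proof (induction w)
  case Nil then show ?case by simp
next
  case (Cons x xs)
  then obtain ns where ns: "length ns = length (remdups_adj xs)" "\<forall>n\<in>set ns. 0 < n"
    "xs = concat (map2 (\<lambda>n a. replicate n a) ns (remdups_adj xs))" by blast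
  show ?case
  proof (cases "remdups_adj xs")
    case Nil
    then have "xs = []" by simp
    then show ?thesis by (intro exI[of _ "[1]"]) simp
  next
    case (Cons y ys)
    then obtain n1 ns' where n1: "ns = n1 # ns'" using ns(1) by (cases ns) auto
    show ?thesis
    proof (cases "x = y")
      case True
      then show ?thesis using ns Cons n1
        by (intro exI[of _ "Suc n1 # ns'"]) (simp add: remdups_adj_Cons)
    next
      case False
      then show ?thesis using ns Cons n1
        by (intro exI[of _ "1 # n1 # ns'"]) (simp add: remdups_adj_Cons)
    qed
  qed
qed

lemma states_exist:
  assumes wf: "wf_wa A"
  shows "pos A q (concat B) t \<Longrightarrow> \<exists>qs. length qs = Suc (length B) \<and> qs ! 0 = q \<and> qs ! length B = t
     \<and> (\<forall>i<length B. pos A (qs ! i) (B ! i) (qs ! Suc i))"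
proof (induction B arbitrary: q)
  case Nil then show ?case by (intro exI[of _ "[q]"]) (simp add: pos_Nil)
next
  case (Cons b B)
  then obtain q' where "pos A q b q'" "pos A q' (concat B) t" using pos_app[OF wf] by auto
  with Cons.IH obtain qs where qs: "length qs = Suc (length B)" "qs ! 0 = q'" "qs ! length B = t"
    "\<forall>i<length B. pos A (qs ! i) (B ! i) (qs ! Suc i)" by blast
  show ?case
  proof (intro exI[of _ "q # qs"] conjI)
    show "\<forall>i<length (b # B). pos A ((q # qs) ! i) ((b # B) ! i) ((q # qs) ! Suc i)"
      using qs \<open>pos A q b q'\<close> by (auto simp: nth_Cons split: nat.splits)
  qed (use qs in auto)
qed

lemma take_drop_Suc: "i \<le> l \<Longrightarrow> l < length B \<Longrightarrow> take (Suc l - i) (drop i B) = take (l - i) (drop i B) @ [B ! l]"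
proof -
  assume h: "i \<le> l" "l < length B"
  have "Suc l - i = Suc (l - i)" using h by simp
  moreover have "drop i B ! (l - i) = B ! l" using h by simp
  moreover have "l - i < length (drop i B)" using h by simp
  ultimately show ?thesis by (simp add: take_Suc_conv_app_nth)
qed

lemma segment_pos:
  assumes wf: "wf_wa A"
    and st: "\<forall>i<length B. pos A (qs ! i) (B ! i) (qs ! Suc i)"
    and lt: "\<forall>i\<le>length B. qs ! i < nstates A"
    and il: "i \<le> l" "l \<le> length B"
  shows "pos A (qs ! i) (concat (take (l - i) (drop i B))) (qs ! l)"
  using il
proof (induction l)
  case 0 then show ?case using lt by (simp add: pos_Nil)
next
  case (Suc l)
  show ?case
  proof (cases "i = Suc l")
    case True then show ?thesis using lt Suc.prems by (simp add: pos_Nil)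
  next
    case False
    then have h: "i \<le> l" "l < length B" using Suc.prems by auto
    have "pos A (qs ! i) (concat (take (l - i) (drop i B))) (qs ! l)" using Suc.IH h by simp
    moreover have "pos A (qs ! l) (B ! l) (qs ! Suc l)" using st h by simp
    ultimately show ?thesis using pos_app[OF wf] by (auto simp: take_drop_Suc[OF h])
  qed
qed

lemma block_bound:
  assumes wf: "wf_wa A" and s: "s < nstates A" and lb: "letter_bounded A (lang A s)" and w: "w \<in> lang A s"
  shows "length (remdups_adj w) \<le> 2 * nstates A"
proof -
  obtain as where as: "\<forall>v\<in>lang A s. in_star_seq as v" using lb by (auto simp: letter_bounded_def)
  have cb: "chg v \<le> length as" if "v \<in> lang A s" for v
    using as that chg_star by (auto simp: in_star_seq_def)
  define rb where "rb = remdups_adj w"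
  obtain ns where ns: "length ns = length rb" "\<forall>n\<in>set ns. 0 < n"
    "w = concat (map2 (\<lambda>n a. replicate n a) ns rb)" using remdups_dec[of w] unfolding rb_def by blast
  define B where "B = map2 (\<lambda>n a. replicate n a) ns rb"
  have lB: "length B = length rb" using ns by (simp add: B_def)
  have Bi: "B ! i = replicate (ns ! i) (rb ! i)" if "i < length B" for i
    using that ns(1) lB by (simp add: B_def)
  have wB: "w = concat B" using ns by (simp add: B_def)
  have ww: "w \<in> words A" "nu A s w > 0" using w by (auto simp: lang_def)
  then obtain t where t: "t \<in> final A" "pos A s w t" using nu_pos_iff[OF wf s] by blast
  obtain qs where qs: "length qs = Suc (length B)" "qs ! 0 = s" "qs ! length B = t"
     "\<forall>i<length B. pos A (qs ! i) (B ! i) (qs ! Suc i)"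
    using states_exist[OF wf, of s B t] t(2) wB by blast
  have lt: "\<forall>i\<le>length B. qs ! i < nstates A"
  proof (intro allI impI)
    fix i assume "i \<le> length B"
    then show "qs ! i < nstates A"
      using qs t(2) by (cases "i = length B") (auto simp: pos_def)
  qed
  let ?m = "length B"
  have inj: "inj_on (\<lambda>i. (qs ! i, i mod 2)) {..<?m}"
  proof (rule inj_onI, rule ccontr)
    fix i l assume i: "i \<in> {..<?m}" and l: "l \<in> {..<?m}" and eq: "(qs ! i, i mod 2) = (qs ! l, l mod 2)" and ne: "i \<noteq> l"
    have key: False if il: "i < l" "l < ?m" "qs ! i = qs ! l" "i mod 2 = l mod 2" for i l
    proof -
      have l2: "i + 2 \<le> l" using il by presburger
      define x where "x = concat (take (i - 0) (drop 0 B))"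
      define y where "y = concat (take (l - i) (drop i B))"
      define z where "z = concat (take (?m - l) (drop l B))"
      have px: "pos A s x (qs ! i)" using segment_pos[OF wf qs(4) lt, of 0 i] il qs(2) by (simp add: x_def)
      have py: "pos A (qs ! i) y (qs ! i)" using segment_pos[OF wf qs(4) lt, of i l] il by (simp add: y_def)
      have pz: "pos A (qs ! i) z t" using segment_pos[OF wf qs(4) lt, of l ?m] il qs(3) by (simp add: z_def)
      define r where "r = Suc (length as)"
      define v where "v = x @ concat (replicate r y) @ z"
      have pv: "pos A s v t" unfolding v_def using px pos_rep[OF wf py] pz pos_app[OF wf] by blast
      then have "v \<in> words A" by (auto simp: pos_def words_def)
      then have "v \<in> lang A s" using nu_pos_iff[OF wf s] pv t(1) by (auto simp: lang_def)
      then have c1: "chg v \<le> length as" by (rule cb)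
      have td: "take (l - i) (drop i B) = B ! i # B ! Suc i # take (l - i - 2) (drop (Suc (Suc i)) B)"
      proof -
        have d1: "drop i B = B ! i # drop (Suc i) B" using il by (simp add: Cons_nth_drop_Suc)
        have d2: "drop (Suc i) B = B ! Suc i # drop (Suc (Suc i)) B" using il l2 by (simp add: Cons_nth_drop_Suc)
        have "l - i = Suc (Suc (l - i - 2))" using l2 by simp
        then show ?thesis by (simp only: d1 d2) simp
      qed
      have ne2: "rb ! i \<noteq> rb ! Suc i" using remdups_adj_adjacent[of i w] il l2 lB unfolding rb_def by simp
      have p1: "0 < ns ! i" "0 < ns ! Suc i" using ns(2) ns(1) lB il l2 by (auto intro: nth_mem)
      have ye: "y = replicate (ns!i) (rb!i) @ replicate (ns!Suc i) (rb!Suc i) @ concat (take (l - i - 2) (drop (Suc (Suc i)) B))"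
        unfolding y_def td using Bi[of i] Bi[of "Suc i"] il l2 lB by simp
      have "1 \<le> chg y" unfolding ye by (rule chg_two[OF ne2 p1])
      then have "r \<le> chg (concat (replicate r y))" using chg_pump[of r y] by (metis mult.right_neutral mult_le_mono2 order_trans)
      also have "\<dots> \<le> chg v" unfolding v_def using chg_app[of x "concat (replicate r y) @ z"] chg_app[of "concat (replicate r y)" z] by simp
      finally show False using c1 by (simp add: r_def)
    qed
    show False
    proof (cases "i < l")
      case True then show False using key[of i l] eq l by auto
    next
      case False then have "l < i" using ne by simp
      then show False using key[of l i] eq i by auto
    qed
  qed
  have "card {..<?m} \<le> card ({..<nstates A} \<times> {..<2::nat})"
    by (rule card_inj_on_le[OF inj]) (use lt in auto)
  then show ?thesis using lB by (simp add: rb_def mult.commute)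
qed


definition Dc :: "nat \<Rightarrow> nat \<Rightarrow> nat \<Rightarrow> nat \<Rightarrow> nat \<Rightarrow> bool" where
  "Dc k x a i i' \<longleftrightarrow> (i' = i \<or> i' = Suc i) \<and> i' \<noteq> 0 \<and> a = (x div k ^ (i' - 1)) mod k"

definition blist :: "nat \<Rightarrow> nat \<Rightarrow> nat \<Rightarrow> nat list" where
  "blist k j x = map (\<lambda>l. (x div k ^ l) mod k) [0..<j]"

fun reach :: "nat \<Rightarrow> nat \<Rightarrow> nat \<Rightarrow> nat list \<Rightarrow> nat \<Rightarrow> nat \<Rightarrow> bool" where
  "reach k j x [] i i'' \<longleftrightarrow> i = i''"
| "reach k j x (a # w) i i'' \<longleftrightarrow> (\<exists>i'<Suc j. Dc k x a i i' \<and> reach k j x w i' i'')"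

lemma reach_range: "reach k j x w i m \<Longrightarrow> i < Suc j \<Longrightarrow> m < Suc j"
  by (induction w arbitrary: i) auto

lemma blist_nth: "l < j \<Longrightarrow> blist k j x ! l = (x div k ^ l) mod k"
  by (simp add: blist_def)

lemma reach_plus_gen:
  "reach k j x w i m \<Longrightarrow> i < Suc j \<Longrightarrow> i \<le> m \<and> (\<exists>n0 ns. length ns = m - i \<and> (\<forall>n\<in>set ns. 0 < n) \<and> (i = 0 \<longrightarrow> n0 = 0)
     \<and> w = replicate n0 (blist k j x ! (i - 1)) @ concat (map2 (\<lambda>n a. replicate n a) ns (take (m - i) (drop i (blist k j x)))))"
proof (induction w arbitrary: i)
  case Nil then show ?case by (intro conjI exI[of _ 0] exI[of _ "[]"]) auto
next
  case (Cons a w)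
  let ?bl = "blist k j x"
  from Cons.prems obtain i' where i': "i' < Suc j" "Dc k x a i i'" "reach k j x w i' m" by auto
  from Cons.IH[OF i'(3) i'(1)] obtain n0 ns where IH: "i' \<le> m" "length ns = m - i'" "\<forall>n\<in>set ns. 0 < n" "i' = 0 \<longrightarrow> n0 = 0"
    "w = replicate n0 (?bl ! (i' - 1)) @ concat (map2 (\<lambda>n a. replicate n a) ns (take (m - i') (drop i' ?bl)))" by blast
  have lbl: "length ?bl = j" by (simp add: blist_def)
  show ?case
  proof (cases "i' = i")
    case True
    then have "i \<noteq> 0" "a = ?bl ! (i - 1)" using i' by (auto simp: Dc_def blist_nth)
    then show ?thesis using IH True
      by (intro conjI exI[of _ "Suc n0"] exI[of _ ns]) auto
  next
    case False
    then have ii: "i' = Suc i" using i' by (auto simp: Dc_def)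
    then have a: "a = ?bl ! i" using i' by (auto simp: Dc_def blist_nth)
    have tk: "take (m - i) (drop i ?bl) = ?bl ! i # take (m - Suc i) (drop (Suc i) ?bl)"
    proof -
      have "drop i ?bl = ?bl ! i # drop (Suc i) ?bl" using i' ii lbl by (simp add: Cons_nth_drop_Suc)
      moreover have "m - i = Suc (m - Suc i)" using IH(1) ii by simp
      ultimately show ?thesis by simp
    qed
    show ?thesis using IH ii
      by (intro conjI exI[of _ 0] exI[of _ "Suc n0 # ns"]) (auto simp: tk a)
  qed
qed

lemma reach_plus: "reach k j x w 0 j \<Longrightarrow> in_plus_seq (blist k j x) w"
proof -
  assume r: "reach k j x w 0 j"
  from reach_plus_gen[OF r] obtain n0 ns where "length ns = j" "\<forall>n\<in>set ns. 0 < n" "n0 = 0"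
    "w = replicate n0 (blist k j x ! (0 - 1)) @ concat (map2 (\<lambda>n a. replicate n a) ns (take j (blist k j x)))"
    by auto
  then show ?thesis unfolding in_plus_seq_def by (intro exI[of _ ns]) (simp add: blist_def)
qed

lemma reach_app: "reach k j x u i l \<Longrightarrow> reach k j x v l m \<Longrightarrow> reach k j x (u @ v) i m"
  by (induction u arbitrary: i) auto

lemma reach_stay: "i < j \<Longrightarrow> reach k j x (replicate n (blist k j x ! i)) (Suc i) (Suc i)"
  by (induction n) (auto simp: Dc_def blist_nth intro!: exI[of _ "Suc i"])

lemma reach_block: "i < j \<Longrightarrow> 0 < n \<Longrightarrow> reach k j x (replicate n (blist k j x ! i)) i (Suc i)"
proof -
  assume h: "i < j" "0 < n"
  then have e: "replicate n (blist k j x ! i) = blist k j x ! i # replicate (n - 1) (blist k j x ! i)"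
    by (cases n) auto
  show ?thesis unfolding e using reach_stay[OF h(1), where n="n - 1" and k=k and x=x] h
    by (auto simp: Dc_def blist_nth intro!: exI[of _ "Suc i"])
qed

lemma reach_blocks: "length ns = j - i \<Longrightarrow> i \<le> j \<Longrightarrow> \<forall>n\<in>set ns. 0 < n \<Longrightarrow>
   reach k j x (concat (map2 (\<lambda>n a. replicate n a) ns (drop i (blist k j x)))) i j"
proof (induction ns arbitrary: i)
  case Nil then show ?case by (simp add: blist_def)
next
  case (Cons n ns)
  then have ij: "i < j" by simp
  have d: "drop i (blist k j x) = blist k j x ! i # drop (Suc i) (blist k j x)"
    using ij by (intro Cons_nth_drop_Suc[symmetric]) (simp add: blist_def)
  have "reach k j x (concat (map2 (\<lambda>n a. replicate n a) ns (drop (Suc i) (blist k j x)))) (Suc i) j"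
    using Cons by simp
  moreover have "reach k j x (replicate n (blist k j x ! i)) i (Suc i)" using reach_block[OF ij] Cons.prems by simp
  ultimately show ?case unfolding d by (simp add: reach_app)
qed

lemma plus_reach: "in_plus_seq (blist k j x) w \<Longrightarrow> reach k j x w 0 j"
  unfolding in_plus_seq_def using reach_blocks[of _ j 0 k x] by (auto simp: blist_def)

fun Dw :: "nat \<Rightarrow> nat \<Rightarrow> nat \<Rightarrow> nat list \<Rightarrow> nat \<Rightarrow> nat \<Rightarrow> rat" where
  "Dw k j x [] i i'' = (if i = i'' then 1 else 0)"
| "Dw k j x (a # w) i i'' = (\<Sum>i'<Suc j. (if Dc k x a i i' then 1 else 0) * Dw k j x w i' i'')"

lemma Dw_nonneg: "0 \<le> Dw k j x w i i''"
  by (induction w arbitrary: i) (auto intro!: sum_nonneg simp del: sum.lessThan_Suc)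

lemma Dw_pos: "0 < Dw k j x w i i'' \<longleftrightarrow> reach k j x w i i''"
proof (induction w arbitrary: i)
  case Nil then show ?case by simp
next
  case (Cons a w)
  let ?f = "\<lambda>i'. (if Dc k x a i i' then 1 else 0) * Dw k j x w i' i''"
  have nn: "\<forall>i'\<in>{..<Suc j}. 0 \<le> ?f i'" using Dw_nonneg by auto
  have "0 < sum ?f {..<Suc j} \<longleftrightarrow> (\<exists>i'\<in>{..<Suc j}. 0 < ?f i')"
  proof
    assume "0 < sum ?f {..<Suc j}"
    then show "\<exists>i'\<in>{..<Suc j}. 0 < ?f i'" by (rule contrapos_pp) (auto simp: not_less intro: sum_nonpos simp del: sum.lessThan_Suc)
  next
    assume "\<exists>i'\<in>{..<Suc j}. 0 < ?f i'"
    then obtain i' where "i' \<in> {..<Suc j}" "0 < ?f i'" by blast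
    then show "0 < sum ?f {..<Suc j}" using nn by (intro sum_pos2) auto
  qed
  also have "\<dots> \<longleftrightarrow> reach k j x (a # w) i i''" using Cons.IH by (auto simp: zero_less_mult_iff)
  finally show ?case by simp
qed


definition pA :: "wa \<Rightarrow> nat \<Rightarrow> nat \<Rightarrow> wa" where
  "pA A j x = \<lparr>nstates = nstates A * Suc j, nletters = nletters A,
     trans = (\<lambda>a. mat (nstates A * Suc j) (nstates A * Suc j)
        (\<lambda>(r, cl). if Dc (nletters A) x a (r mod Suc j) (cl mod Suc j) then trans A a $$ (r div Suc j, cl div Suc j) else 0)),
     final = (\<lambda>t. t * Suc j + j) ` final A\<rparr>"

lemma pA_simps[simp]: "nstates (pA A j x) = nstates A * Suc j" "nletters (pA A j x) = nletters A"
  "final (pA A j x) = (\<lambda>t. t * Suc j + j) ` final A"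
  by (simp_all add: pA_def)

lemma pA_trans: "trans (pA A j x) a = mat (nstates A * Suc j) (nstates A * Suc j)
   (\<lambda>(r, cl). if Dc (nletters A) x a (r mod Suc j) (cl mod Suc j) then trans A a $$ (r div Suc j, cl div Suc j) else 0)"
  by (simp add: pA_def)

lemma lt_mult_add: "q < n \<Longrightarrow> i < J \<Longrightarrow> q * J + i < n * (J::nat)"
proof -
  assume h: "q < n" "i < J"
  have "q * J + i < Suc q * J" using h by simp
  also have "\<dots> \<le> n * J" using h by (intro mult_le_mono1) simp
  finally show ?thesis .
qed

lemma div_lt: "r < n * Suc j \<Longrightarrow> r div Suc j < (n::nat)"
  by (rule less_mult_imp_div_less) simp

lemma wf_pA: "wf_wa A \<Longrightarrow> wf_wa (pA A j x)"
proof -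
  assume wf: "wf_wa A"
  have c: "\<forall>a<nletters (pA A j x). trans (pA A j x) a \<in> carrier_mat (nstates (pA A j x)) (nstates (pA A j x))"
    by (simp add: pA_trans)
  have nn: "\<forall>a<nletters (pA A j x). \<forall>i<nstates (pA A j x). \<forall>ja<nstates (pA A j x). 0 \<le> trans (pA A j x) a $$ (i, ja)"
  proof (intro allI impI)
    fix a i ja assume a: "a < nletters (pA A j x)" and i: "i < nstates (pA A j x)" and ja: "ja < nstates (pA A j x)"
    have "0 \<le> trans A a $$ (i div Suc j, ja div Suc j)"
      using wf_nonneg[OF wf] a i ja div_lt by simp
    then show "0 \<le> trans (pA A j x) a $$ (i, ja)" using i ja by (simp add: pA_trans)
  qed
  have f: "final (pA A j x) \<subseteq> {..<nstates (pA A j x)}"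
  proof
    fix y assume "y \<in> final (pA A j x)"
    then obtain t where t: "t \<in> final A" "y = t * Suc j + j" by auto
    then have "t < nstates A" using wf by (auto simp: wf_wa_def)
    then show "y \<in> {..<nstates (pA A j x)}" using t lt_mult_add[of t "nstates A" j "Suc j"] by simp
  qed
  show ?thesis unfolding wf_wa_def[of "pA A j x"] using c nn f by blast
qed

lemma sum_divmod: "0 < J \<Longrightarrow> (\<Sum>y<n * (J::nat). g (y div J) (y mod J)) = (\<Sum>q<n. \<Sum>i<J. g q i)"
proof -
  assume J: "0 < J"
  have "(\<Sum>q<n. \<Sum>i<J. g q i) = (\<Sum>p\<in>{..<n} \<times> {..<J}. g (fst p) (snd p))"
    by (simp add: sum.cartesian_product split_def)
  also have "\<dots> = (\<Sum>y<n * J. g (y div J) (y mod J))"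
  proof (rule sum.reindex_bij_witness[where i="\<lambda>y. (y div J, y mod J)" and j="\<lambda>p. fst p * J + snd p"])
    fix p assume "p \<in> {..<n} \<times> {..<J}"
    then show "fst p * J + snd p \<in> {..<n * J}" by (auto intro: lt_mult_add)
  next
    fix y :: nat assume "y \<in> {..<n * J}"
    then show "(y div J, y mod J) \<in> {..<n} \<times> {..<J}" using J
      by (auto intro: less_mult_imp_div_less)
  qed (use J in auto)
  finally show ?thesis by simp
qed

lemma prodm_pA:
  assumes wf: "wf_wa A" and w: "set w \<subseteq> {..<nletters A}"
  shows "r < nstates A * Suc j \<Longrightarrow> cl < nstates A * Suc j \<Longrightarrow>
    prodm (pA A j x) w $$ (r, cl) = prodm A w $$ (r div Suc j, cl div Suc j) * Dw (nletters A) j x w (r mod Suc j) (cl mod Suc j)"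
  using w
proof (induction w arbitrary: r)
  case Nil
  have "r = cl \<longleftrightarrow> r div Suc j = cl div Suc j \<and> r mod Suc j = cl mod Suc j"
    by (metis div_mult_mod_eq)
  then show ?case using Nil div_lt by (simp add: prodm_Nil_idx)
next
  case (Cons a w)
  let ?J = "Suc j" and ?n = "nstates A" and ?k = "nletters A"
  have a: "a < ?k" and ws: "set w \<subseteq> {..<?k}" using Cons.prems by auto
  have rn: "r div ?J < ?n" "cl div ?J < ?n" using Cons.prems div_lt by auto
  have "prodm (pA A j x) (a # w) $$ (r, cl) = (\<Sum>y<?n * ?J. trans (pA A j x) a $$ (r, y) * prodm (pA A j x) w $$ (y, cl))"
    using prodm_Cons_idx[OF wf_pA[OF wf], where a=a and w=w and q=r and q''=cl] Cons.prems by simp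
  also have "\<dots> = (\<Sum>y<?n * ?J. (if Dc ?k x a (r mod ?J) (y mod ?J) then trans A a $$ (r div ?J, y div ?J) else 0)
        * (prodm A w $$ (y div ?J, cl div ?J) * Dw ?k j x w (y mod ?J) (cl mod ?J)))"
    by (rule sum.cong) (use Cons ws in \<open>auto simp: pA_trans\<close>)
  also have "\<dots> = (\<Sum>q<?n. \<Sum>i<?J. (if Dc ?k x a (r mod ?J) i then trans A a $$ (r div ?J, q) else 0)
        * (prodm A w $$ (q, cl div ?J) * Dw ?k j x w i (cl mod ?J)))"
    by (rule sum_divmod) simp
  also have "\<dots> = (\<Sum>q<?n. \<Sum>i<?J. (trans A a $$ (r div ?J, q) * prodm A w $$ (q, cl div ?J))
        * ((if Dc ?k x a (r mod ?J) i then 1 else 0) * Dw ?k j x w i (cl mod ?J)))"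
    by (intro sum.cong refl) auto
  also have "\<dots> = (\<Sum>q<?n. trans A a $$ (r div ?J, q) * prodm A w $$ (q, cl div ?J))
        * (\<Sum>i<?J. (if Dc ?k x a (r mod ?J) i then 1 else 0) * Dw ?k j x w i (cl mod ?J))"
    by (simp only: sum_product)
  also have "\<dots> = prodm A (a # w) $$ (r div ?J, cl div ?J) * Dw ?k j x (a # w) (r mod ?J) (cl mod ?J)"
    using prodm_Cons_idx[OF wf a ws rn] by simp
  finally show ?case .
qed

lemma nu_pA:
  assumes wf: "wf_wa A" and s: "s < nstates A" and w: "w \<in> words A"
  shows "nu (pA A j x) (s * Suc j) w = nu A s w * Dw (nletters A) j x w 0 j"
proof -
  let ?J = "Suc j" and ?n = "nstates A"
  have F: "final A \<subseteq> {..<?n}" using wf by (simp add: wf_wa_def)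
  have ws: "set w \<subseteq> {..<nletters A}" using w by (auto simp: words_def)
  have inj: "inj_on (\<lambda>t. t * ?J + j) (final A)"
    by (rule inj_onI) (metis add_right_cancel mult_right_cancel zero_less_Suc less_not_refl)
  have sJ: "s * ?J < ?n * ?J" using s by (intro mult_less_mono1) auto
  have "nu (pA A j x) (s * ?J) w = (\<Sum>t\<in>final A. prodm (pA A j x) w $$ (s * ?J, t * ?J + j))"
    unfolding nu_prodm using inj by (simp add: sum.reindex)
  also have "\<dots> = (\<Sum>t\<in>final A. prodm A w $$ (s, t) * Dw (nletters A) j x w 0 j)"
  proof (rule sum.cong[OF refl])
    fix t assume t: "t \<in> final A"
    then have tl: "t * ?J + j < ?n * ?J" using F lt_mult_add[of t ?n j ?J] by auto
    have d1: "(t * ?J + j) div ?J = t" "(t * ?J + j) mod ?J = j" by (simp_all del: mult_Suc_right)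
    show "prodm (pA A j x) w $$ (s * ?J, t * ?J + j) = prodm A w $$ (s, t) * Dw (nletters A) j x w 0 j"
      using prodm_pA[OF wf ws sJ tl, of x] d1 by (simp del: mult_Suc_right)
  qed
  also have "\<dots> = nu A s w * Dw (nletters A) j x w 0 j"
    unfolding nu_prodm by (simp add: sum_distrib_right)
  finally show ?thesis .
qed


lemma enc_rat0: "enc_rat 0 = 3"
  by (simp add: enc_rat_def int_encode_def sum_encode_def prod_encode_def triangle_def)

lemma mat_to_list_mat: "mat_to_list (mat nr nc f) = map (\<lambda>i. map (\<lambda>j. f (i, j)) [0..<nc]) [0..<nr]"
  unfolding mat_to_list_def by (auto intro!: map_cong)

lemma mat_to_list_len: "length (mat_to_list M) = dim_row M" by (simp add: mat_to_list_def)
lemma mat_to_list_len2: "i < dim_row M \<Longrightarrow> length (mat_to_list M ! i) = dim_col M" by (simp add: mat_to_list_def)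
lemma mat_to_list_nth: "i < dim_row M \<Longrightarrow> j < dim_col M \<Longrightarrow> mat_to_list M ! i ! j = M $$ (i, j)"
  by (simp add: mat_to_list_def)

lemma sorted_image_map:
  assumes "finite F"
  shows "sorted_list_of_set ((\<lambda>t. t * Suc j + j) ` F) = map (\<lambda>t. t * Suc j + j) (sorted_list_of_set F)"
proof -
  let ?f = "\<lambda>t::nat. t * Suc j + j"
  let ?s = "sorted_list_of_set F"
  let ?l = "map ?f ?s"
  have set: "set ?l = ?f ` F" using assms by simp
  have inj: "inj ?f" by (rule injI) (simp del: mult_Suc_right)
  have dist: "distinct ?l" unfolding distinct_map using inj by (auto intro: inj_on_subset)
  have s0: "sorted_wrt (\<le>) ?s" by simp
  have "sorted_wrt (\<lambda>x y. ?f x \<le> ?f y) ?s"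
    by (rule sorted_wrt_mono_rel[OF _ s0]) (simp add: mult_le_mono1 del: mult_Suc_right)
  then have sorted: "sorted ?l" by (simp only: sorted_map)
  have "sorted_list_of_set (?f ` F) = sorted_list_of_set (set ?l)" using set by simp
  also have "\<dots> = sort (remdups ?l)" by (rule sorted_list_of_set_sort_remdups)
  also have "\<dots> = ?l" using sorted dist by (simp add: distinct_remdups_id sorted_sort_id)
  finally show ?thesis .
qed

lemma codef_enc:
  assumes wf: "wf_wa A"
  shows "codef x j (enc_inst (A, s, s')) = enc_inst (pA A j x, s * Suc j, s' * Suc j)"
proof -
  let ?c = "enc_inst (A, s, s')" and ?n = "nstates A" and ?k = "nletters A" and ?J = "Suc j"
  let ?N = "nstates A * Suc j"
  let ?Tc = "list_encode (map (\<lambda>a. enc_mat (trans A a)) [0..<?k])"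
  let ?Fl = "sorted_list_of_set (final A)"
  have c: "?c = list_encode [?n, ?k, ?Tc, list_encode ?Fl, s, s']" by (simp add: enc_inst_def)
  have n0: "nthc ?c 0 = ?n" "nthc ?c 1 = ?k" "nthc ?c 2 = ?Tc" "nthc ?c 3 = list_encode ?Fl"
    "nthc ?c 4 = s" "nthc ?c 5 = s'"
    unfolding c by (simp_all del: list_encode.simps)
  have fin: "finite (final A)" using wf by (auto simp: wf_wa_def intro: finite_subset)
  have entry: "entryf cl r a x j ?c = enc_rat (if Dc ?k x a (r mod ?J) (cl mod ?J) then trans A a $$ (r div ?J, cl div ?J) else 0)"
    if a: "a < ?k" and r: "r < ?N" and cl: "cl < ?N" for a r cl
  proof -
    have M: "trans A a \<in> carrier_mat ?n ?n" using wf_trans[OF wf a] .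
    have q: "r div ?J < ?n" "cl div ?J < ?n" using r cl div_lt by auto
    have e1: "nthc ?Tc a = enc_mat (trans A a)" using a by (simp del: list_encode.simps)
    have e2: "nthc (enc_mat (trans A a)) 2 = list_encode (map (\<lambda>row. list_encode (map enc_rat row)) (mat_to_list (trans A a)))"
      by (simp add: enc_mat_def del: list_encode.simps)
    have e3: "nthc (list_encode (map (\<lambda>row. list_encode (map enc_rat row)) (mat_to_list (trans A a)))) (r div ?J)
        = list_encode (map enc_rat (mat_to_list (trans A a) ! (r div ?J)))"
      using q M by (simp add: mat_to_list_len del: list_encode.simps)
    have e4: "nthc (list_encode (map enc_rat (mat_to_list (trans A a) ! (r div ?J)))) (cl div ?J) = enc_rat (trans A a $$ (r div ?J, cl div ?J))"
      using q M by (simp add: mat_to_list_len2 mat_to_list_nth del: list_encode.simps)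
    have ce: "((cl mod ?J = r mod ?J \<or> cl mod ?J = Suc (r mod ?J)) \<and> cl mod ?J \<noteq> 0
        \<and> a = (x div (nthc ?c 1) ^ (cl mod ?J - 1)) mod (nthc ?c 1)) = Dc ?k x a (r mod ?J) (cl mod ?J)"
      unfolding Dc_def n0(2) ..
    have "entryf cl r a x j ?c = (if Dc ?k x a (r mod ?J) (cl mod ?J) then
       nthc (nthc (nthc (nthc (nthc ?c 2) a) 2) (r div Suc j)) (cl div Suc j) else 3)"
      unfolding entryf_def ce ..
    also have "\<dots> = (if Dc ?k x a (r mod ?J) (cl mod ?J) then enc_rat (trans A a $$ (r div ?J, cl div ?J)) else 3)"
      unfolding n0(3) e1 e2 e3 e4 ..
    also have "\<dots> = enc_rat (if Dc ?k x a (r mod ?J) (cl mod ?J) then trans A a $$ (r div ?J, cl div ?J) else 0)"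
      by (simp add: enc_rat0)
    finally show ?thesis .
  qed
  have T: "Tf x j ?c = list_encode (map (\<lambda>a. enc_mat (trans (pA A j x) a)) [0..<?k])"
  proof -
    have "matf a x j ?c = enc_mat (trans (pA A j x) a)" if a: "a < ?k" for a
    proof -
      have rw: "rowf r a x j ?c = list_encode (map (\<lambda>cl. enc_rat (if Dc ?k x a (r mod ?J) (cl mod ?J) then trans A a $$ (r div ?J, cl div ?J) else 0)) [0..<?N])"
        if r: "r < ?N" for r
        unfolding rowf_def n0 using entry[OF a r] by (auto intro!: arg_cong[where f=list_encode] map_cong)
      have rows: "map (\<lambda>r. rowf r a x j ?c) [0..<?N] = map (\<lambda>r. list_encode (map (\<lambda>cl. enc_rat (if Dc ?k x a (r mod ?J) (cl mod ?J) then trans A a $$ (r div ?J, cl div ?J) else 0)) [0..<?N])) [0..<?N]"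
        by (rule map_cong[OF refl]) (simp add: rw del: list_encode.simps)
      show ?thesis
        unfolding matf_def enc_mat_def pA_trans mat_to_list_mat n0 rows
        by (simp del: list_encode.simps add: map_map o_def)
    qed
    then show ?thesis unfolding Tf_def n0 by (auto intro!: arg_cong[where f=list_encode] map_cong)
  qed
  have F: "Ff j ?c = list_encode (sorted_list_of_set (final (pA A j x)))"
  proof -
    have "map (\<lambda>i. nthc (list_encode ?Fl) i * ?J + j) [0..<length ?Fl] = map (\<lambda>t. t * ?J + j) ?Fl"
      by (rule nth_equalityI) auto
    then show ?thesis unfolding Ff_def n0 using sorted_image_map[OF fin, of j] by (simp del: list_encode.simps)
  qed
  show ?thesis unfolding codef_def T F n0 by (simp add: enc_inst_def del: list_encode.simps)
qed


lemma ex_x: "set bl \<subseteq> {..<k} \<Longrightarrow> \<exists>x < k ^ length bl. blist k (length bl) x = bl"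
proof (induction bl)
  case Nil then show ?case by (simp add: blist_def)
next
  case (Cons b bl)
  then obtain x' where x': "x' < k ^ length bl" "blist k (length bl) x' = bl" by auto
  have b: "b < k" using Cons.prems by simp
  define x where "x = b + k * x'"
  have "x < k + k * x'" using b by (simp add: x_def)
  also have "\<dots> = k * Suc x'" by simp
  also have "\<dots> \<le> k * k ^ length bl" using x' by (intro mult_le_mono2) simp
  finally have xl: "x < k ^ length (b # bl)" by simp
  have m: "x mod k = b" using b by (simp add: x_def)
  have d: "x div (k * k ^ l) = x' div k ^ l" for l
  proof -
    have "x div (k * k ^ l) = x div k div k ^ l" by (simp add: div_mult2_eq)
    also have "x div k = x'" using b by (simp add: x_def)
    finally show ?thesis .
  qed
  have "blist k (length (b # bl)) x = (x mod k) # map (\<lambda>l. (x div k ^ Suc l) mod k) [0..<length bl]"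
    unfolding blist_def by (simp add: upt_conv_Cons map_Suc_upt[symmetric] del: upt_Suc)
  also have "\<dots> = b # bl" using x'(2) by (simp add: m d blist_def)
  finally show ?case using xl by blast
qed

lemma prod_bits: "finite S \<Longrightarrow> (\<Prod>i\<in>S. (if P i then 1 else 0 :: nat)) = (if \<forall>i\<in>S. P i then 1 else 0)"
  by (induction S rule: finite_induct) auto

lemma blist_set: "x < k ^ j \<Longrightarrow> set (blist k j x) \<subseteq> {..<k}"
proof (cases "j = 0")
  case True then show ?thesis by (simp add: blist_def)
next
  case False
  assume "x < k ^ j"
  then have "k \<noteq> 0" using False by (cases k) (auto simp: power_0_left)
  then show ?thesis by (auto simp: blist_def)
qed

lemma words_pA: "words (pA A j x) = words A" by (simp add: words_def)

lemma lang_pA_plus: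
  assumes wf: "wf_wa A" and s0: "s0 < nstates A" and w: "w \<in> lang (pA A j x) (s0 * Suc j)"
  shows "in_plus_seq (blist (nletters A) j x) w"
proof -
  have ww: "w \<in> words A" "nu (pA A j x) (s0 * Suc j) w > 0" using w by (auto simp: lang_def words_pA)
  then have "nu A s0 w * Dw (nletters A) j x w 0 j > 0" using nu_pA[OF wf s0] by simp
  moreover have "nu A s0 w \<ge> 0" using nu_nonneg[OF wf s0 ww(1)] .
  ultimately have "Dw (nletters A) j x w 0 j > 0" using Dw_nonneg[of "nletters A" j x w 0 j]
    by (auto simp: zero_less_mult_iff)
  then show ?thesis using Dw_pos reach_plus by blast
qed

lemma plb_pI:
  assumes wf: "wf_wa A" and s: "s < nstates A" and s': "s' < nstates A" and x: "x < nletters A ^ j"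
  shows "plb_inst (pA A j x, s * Suc j, s' * Suc j)"
proof -
  have w1: "wf_inst (pA A j x, s * Suc j, s' * Suc j)"
  proof -
    have "s * Suc j < nstates A * Suc j" "s' * Suc j < nstates A * Suc j"
      using s s' by (intro mult_less_mono1; simp)+
    then show ?thesis using wf_pA[OF wf] by (simp add: wf_inst_def del: mult_Suc_right)
  qed
  have "plus_letter_bounded (pA A j x) (lang (pA A j x) (s0 * Suc j))" if "s0 < nstates A" for s0
    unfolding plus_letter_bounded_def
    using blist_set[OF x] lang_pA_plus[OF wf that] by (intro exI[of _ "blist (nletters A) j x"]) auto
  then show ?thesis using w1 s s' by (simp add: plb_inst_def)
qed

lemma bigO_pI:
  assumes wf: "wf_wa A" and s: "s < nstates A" and s': "s' < nstates A" and b: "big_O (A, s, s')"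
  shows "big_O (pA A j x, s * Suc j, s' * Suc j)"
proof -
  obtain C :: real where C: "C > 0" "\<forall>w\<in>words A. real_of_rat (nu A s w) \<le> C * real_of_rat (nu A s' w)"
    using b by (auto simp: big_O_def)
  have "real_of_rat (nu (pA A j x) (s * Suc j) w) \<le> C * real_of_rat (nu (pA A j x) (s' * Suc j) w)"
    if w: "w \<in> words A" for w
  proof -
    let ?d = "real_of_rat (Dw (nletters A) j x w 0 j)"
    have d: "?d \<ge> 0" using Dw_nonneg by (simp add: zero_le_of_rat_iff)
    have "real_of_rat (nu A s w) * ?d \<le> C * real_of_rat (nu A s' w) * ?d"
      using C(2) w d by (intro mult_right_mono) auto
    then show ?thesis using nu_pA[OF wf s w] nu_pA[OF wf s' w] by (simp add: of_rat_mult mult.assoc)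
  qed
  then show ?thesis using C(1) by (auto simp: big_O_def words_pA)
qed

lemma pI_bigO:
  assumes wf: "wf_wa A" and s: "s < nstates A" and s': "s' < nstates A"
    and lb: "letter_bounded A (lang A s)"
    and all: "\<forall>j<Suc (2 * nstates A). \<forall>x<nletters A ^ j. big_O (pA A j x, s * Suc j, s' * Suc j)"
  shows "big_O (A, s, s')"
proof -
  let ?S = "SIGMA j:{..<Suc (2 * nstates A)}. {..<nletters A ^ j}"
  have fin: "finite ?S" by auto
  have "\<forall>p\<in>?S. \<exists>C::real. C > 0 \<and> (\<forall>w\<in>words A. real_of_rat (nu (pA A (fst p) (snd p)) (s * Suc (fst p)) w)
      \<le> C * real_of_rat (nu (pA A (fst p) (snd p)) (s' * Suc (fst p)) w))"
    using all by (auto simp: big_O_def words_pA)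
  then obtain Cf where Cf: "\<forall>p\<in>?S. Cf p > 0 \<and> (\<forall>w\<in>words A. real_of_rat (nu (pA A (fst p) (snd p)) (s * Suc (fst p)) w)
      \<le> Cf p * real_of_rat (nu (pA A (fst p) (snd p)) (s' * Suc (fst p)) w))"
    by metis
  define C0 where "C0 = 1 + (\<Sum>p\<in>?S. Cf p)"
  have Cnn: "0 \<le> Cf p" if "p \<in> ?S" for p using bspec[OF Cf that] by simp
  have sumnn: "(\<Sum>p\<in>?S. Cf p) \<ge> 0" using Cnn by (intro sum_nonneg) auto
  have C0: "C0 > 0" using sumnn by (simp add: C0_def)
  have Cle: "Cf p \<le> C0" if "p \<in> ?S" for p
  proof -
    have "Cf p \<le> (\<Sum>p\<in>?S. Cf p)" using that Cnn fin by (intro member_le_sum) auto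
    then show ?thesis by (simp add: C0_def)
  qed
  have "real_of_rat (nu A s w) \<le> C0 * real_of_rat (nu A s' w)" if w: "w \<in> words A" for w
  proof (cases "nu A s w > 0")
    case False
    then have "nu A s w = 0" using nu_nonneg[OF wf s w] by simp
    then show ?thesis using nu_nonneg[OF wf s' w] C0 by (simp add: zero_le_of_rat_iff)
  next
    case True
    then have wl: "w \<in> lang A s" using w by (simp add: lang_def)
    define bl where "bl = remdups_adj w"
    define j where "j = length bl"
    have j: "j < Suc (2 * nstates A)" using block_bound[OF wf s lb wl] by (simp add: j_def bl_def)
    have bs: "set bl \<subseteq> {..<nletters A}" using w by (auto simp: bl_def words_def)
    obtain x where x: "x < nletters A ^ j" "blist (nletters A) j x = bl" using ex_x[OF bs] by (auto simp: j_def)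
    have p: "(j, x) \<in> ?S" using j x by auto
    have "in_plus_seq bl w" using remdups_dec[of w] unfolding in_plus_seq_def bl_def by blast
    then have "reach (nletters A) j x w 0 j" using plus_reach x(2) by metis
    then have dpos: "Dw (nletters A) j x w 0 j > 0" using Dw_pos by blast
    let ?d = "real_of_rat (Dw (nletters A) j x w 0 j)"
    have d: "?d > 0" using dpos by (simp add: zero_less_of_rat_iff)
    have "real_of_rat (nu A s w) * ?d \<le> Cf (j, x) * (real_of_rat (nu A s' w) * ?d)"
    proof -
      have "real_of_rat (nu (pA A j x) (s * Suc j) w) \<le> Cf (j, x) * real_of_rat (nu (pA A j x) (s' * Suc j) w)"
        using bspec[OF Cf p] w by (simp add: words_pA del: mult_Suc_right)
      then show ?thesis using nu_pA[OF wf s w, of j x] nu_pA[OF wf s' w, of j x] by (simp add: of_rat_mult del: mult_Suc_right)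
    qed
    then have "real_of_rat (nu A s w) \<le> Cf (j, x) * real_of_rat (nu A s' w)" using d
      by (simp add: mult.assoc[symmetric])
    also have "\<dots> \<le> C0 * real_of_rat (nu A s' w)"
      using Cle[OF p] nu_nonneg[OF wf s' w] by (intro mult_right_mono) (auto simp: zero_le_of_rat_iff)
    finally show ?thesis .
  qed
  then show ?thesis using C0 by (auto simp: big_O_def)
qed

theorem lemma8p13:
  shows "\<exists>p :: recf. \<forall>Or. plb_oracle Or \<longrightarrow>
           (\<forall>I. lb_inst I \<longrightarrow>
              (\<forall>r. ev Or p [enc_inst I] r \<longleftrightarrow> r = (if big_O I then 1 else 0)))"
proof (intro exI[of _ r_main] allI impI)
  fix Or I r
  assume orc: "plb_oracle Or" and lbi: "lb_inst I"
  obtain A s s' where I: "I = (A, s, s')" by (cases I) auto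
  have wf: "wf_wa A" and s: "s < nstates A" and s': "s' < nstates A" and lb: "letter_bounded A (lang A s)"
    using lbi by (auto simp: I lb_inst_def wf_inst_def)
  let ?c = "enc_inst (A, s, s')"
  have n0: "nthc ?c 0 = nstates A" "nthc ?c 1 = nletters A"
    by (simp_all add: enc_inst_def del: list_encode.simps)
  have each: "Or (codef x j ?c) = (if big_O (pA A j x, s * Suc j, s' * Suc j) then 1 else 0)"
    if "x < nletters A ^ j" for j x
    using orc plb_pI[OF wf s s' that] codef_enc[OF wf] by (simp add: plb_oracle_def)
  have "mainf Or ?c = (\<Prod>j<Suc (2 * nstates A). \<Prod>x<nletters A ^ j.
      (if big_O (pA A j x, s * Suc j, s' * Suc j) then 1 else 0))"
    unfolding mainf_def n0 using each by (intro prod.cong refl) auto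
  also have "\<dots> = (\<Prod>j<Suc (2 * nstates A). (if \<forall>x<nletters A ^ j. big_O (pA A j x, s * Suc j, s' * Suc j) then 1 else 0))"
    by (intro prod.cong refl) (simp add: prod_bits lessThan_def)
  also have "\<dots> = (if \<forall>j<Suc (2 * nstates A). \<forall>x<nletters A ^ j. big_O (pA A j x, s * Suc j, s' * Suc j) then 1 else 0)"
    by (simp add: prod_bits lessThan_def)
  also have "\<dots> = (if big_O I then 1 else 0)"
    using bigO_pI[OF wf s s'] pI_bigO[OF wf s s' lb] by (auto simp: I)
  finally show "ev Or r_main [enc_inst I] r \<longleftrightarrow> r = (if big_O I then 1 else 0)"
    using ev_main I by simp
qed


end
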